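(* Let $I$ be an index set of non-measurable cardinality and let $H$ be the group $\mathbb Z^{(I)}$ with the topology of pointwise convergence on $\mathbb Z^I$. Then the map $\theta:\mathbb Z^I\otimes_{\mathcal Q}\mathbb T\to\widehat H$ determined by $\theta(\bar x\otimes t)[\bar g]=t\cdot\langle\bar g,\bar x\rangle$ ($\bar x\in\mathbb Z^I$, $t\in\mathbb T$, $\bar g\in H$) is a well-defined injective group homomorphism into $\widehat H$; thus $\mathbb Z^I\otimes_{\mathcal Q}\mathbb T$ is canonically embedded in $\widehat H$.
   Context: $\mathbb Z^{(I)}$ is the group of finitely supported functions $I\to\mathbb Z$, paired with $\mathbb Z^I$ by $\langle\bar g,\bar x\rangle=\sum_{i\in I}\bar g(i)\bar x(i)$; $H$ carries the weakest topology making all maps $\bar g\mapsto\langle\bar g,\bar x\rangle\in\mathbb Z$ ($\mathbb Z$ discrete) continuous. $\mathbb Z^I$ has the product topology; $\mathbb T=\mathbb R/\mathbb Z$; $\widehat H$ is the group of continuous homomorphisms $H\to\mathbb T$. A subset $A$ of a topological abelian group $L$ is quasi-convex if for every $g\notin A$ there is a continuous character $\chi$ with $|\chi(a)|\le1/4$ on $A$ and $|\chi(g)|>1/4$; $\mathcal Q$ is the class of Hausdorff abelian groups with a basis at $0$ of quasi-convex sets. A continuous bihomomorphism is separately a continuous homomorphism in each variable and continuous at $(0,0)$. $\mathbb Z^I\otimes_{\mathcal Q}\mathbb T$ is the group in $\mathcal Q$ with a continuous bihomomorphism $(\bar x,t)\mapsto\bar x\otimes t$ from $\mathbb Z^I\times\mathbb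 T$ through which every continuous bihomomorphism into a group of $\mathcal Q$ factors via a unique continuous homomorphism. *)

theory Defs
  imports "HOL-Analysis.Analysis" "HOL-Algebra.Group"
begin

definition top_ab_group :: "('a, 'b) monoid_scheme \<Rightarrow> 'a topology \<Rightarrow> bool" where
  "top_ab_group G \<tau> \<longleftrightarrow> comm_group G \<and> topspace \<tau> = carrier G \<and>
     continuous_map (prod_topology \<tau> \<tau>) \<tau> (\<lambda>p. fst p \<otimes>\<^bsub>G\<^esub> snd p) \<and>
     continuous_map \<tau> \<tau> (\<lambda>x. inv\<^bsub>G\<^esub> x)"

section \<open>The circle group T = R/Z, represented by [0,1) with addition mod 1\<close>

definition T_grp :: "real monoid" where
  "T_grp = \<lparr>carrier = {0..<1}, mult = (\<lambda>x y. frac (x + y)), one = 0\<rparr>"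

text \<open>Quotient topology of R/Z: U is open iff its preimage under frac is open in R.\<close>
definition T_top :: "real topology" where
  "T_top = topology (\<lambda>U. U \<subseteq> {0..<1} \<and> open {x. frac x \<in> U})"

definition tnorm :: "real \<Rightarrow> real" where
  "tnorm t = \<bar>t - of_int (round t)\<bar>"

definition tmul :: "real \<Rightarrow> int \<Rightarrow> real" where
  "tmul t k = frac (of_int k * t)"

definition cont_chars :: "('a, 'b) monoid_scheme \<Rightarrow> 'a topology \<Rightarrow> ('a \<Rightarrow> real) set" where
  "cont_chars G \<tau> = {ch. ch \<in> hom G T_grp \<and> continuous_map \<tau> T_top ch}"

definition quasi_convex :: "('a, 'b) monoid_scheme \<Rightarrow> 'a topology \<Rightarrow> 'a set \<Rightarrow> bool" where
  "quasi_convex G \<tau> A \<longleftrightarrow> A \<subseteq> carrier G \<and>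
     (\<forall>g \<in> carrier G - A. \<exists>ch \<in> cont_chars G \<tau>.
        (\<forall>a\<in>A. tnorm (ch a) \<le> 1/4) \<and> tnorm (ch g) > 1/4)"

definition in_Q :: "('a, 'b) monoid_scheme \<Rightarrow> 'a topology \<Rightarrow> bool" where
  "in_Q G \<tau> \<longleftrightarrow> top_ab_group G \<tau> \<and> Hausdorff_space \<tau> \<and>
     (\<forall>U. openin \<tau> U \<and> \<one>\<^bsub>G\<^esub> \<in> U \<longrightarrow>
        (\<exists>V. quasi_convex G \<tau> V \<and> V \<subseteq> U \<and>
             (\<exists>W. openin \<tau> W \<and> \<one>\<^bsub>G\<^esub> \<in> W \<and> W \<subseteq> V)))"

definition cont_bihom ::
  "('a, 'x) monoid_scheme \<Rightarrow> 'a topology \<Rightarrow> ('b, 'y) monoid_scheme \<Rightarrow> 'b topology \<Rightarrow>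
   ('c, 'z) monoid_scheme \<Rightarrow> 'c topology \<Rightarrow> ('a \<Rightarrow> 'b \<Rightarrow> 'c) \<Rightarrow> bool" where
  "cont_bihom G \<tau>G K \<tau>K M \<tau>M \<beta> \<longleftrightarrow>
     (\<forall>x\<in>carrier G. \<beta> x \<in> hom K M \<and> continuous_map \<tau>K \<tau>M (\<beta> x)) \<and>
     (\<forall>y\<in>carrier K. (\<lambda>x. \<beta> x y) \<in> hom G M \<and> continuous_map \<tau>G \<tau>M (\<lambda>x. \<beta> x y)) \<and>
     (\<forall>U. openin \<tau>M U \<and> \<one>\<^bsub>M\<^esub> \<in> U \<longrightarrow>
        (\<exists>V W. openin \<tau>G V \<and> \<one>\<^bsub>G\<^esub> \<in> V \<and> openin \<tau>K W \<and> \<one>\<^bsub>K\<^esub> \<in> W \<and>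
               (\<forall>x\<in>V. \<forall>y\<in>W. \<beta> x y \<in> U)))"

text \<open>(L, \<tau>L, \<beta>) is a Q-tensor product of G and K: L is in Q, \<beta> is a continuous
  bihomomorphism, and every continuous bihomomorphism into a group of Q (carried by
  the universe type 'm) factors through \<beta> via a unique continuous homomorphism.\<close>
definition is_Q_tensor ::
  "('a, 'x) monoid_scheme \<Rightarrow> 'a topology \<Rightarrow> ('b, 'y) monoid_scheme \<Rightarrow> 'b topology \<Rightarrow>
   ('l, 'z) monoid_scheme \<Rightarrow> 'l topology \<Rightarrow> ('a \<Rightarrow> 'b \<Rightarrow> 'l) \<Rightarrow> 'm itself \<Rightarrow> bool" where
  "is_Q_tensor G \<tau>G K \<tau>K L \<tau>L \<beta> (_::'m itself) \<longleftrightarrow>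
     in_Q L \<tau>L \<and> cont_bihom G \<tau>G K \<tau>K L \<tau>L \<beta> \<and>
     (\<forall>(M::'m monoid) \<tau>M \<gamma>. in_Q M \<tau>M \<and> cont_bihom G \<tau>G K \<tau>K M \<tau>M \<gamma> \<longrightarrow>
        (\<exists>\<phi>. \<phi> \<in> hom L M \<and> continuous_map \<tau>L \<tau>M \<phi> \<and>
             (\<forall>x\<in>carrier G. \<forall>y\<in>carrier K. \<phi> (\<beta> x y) = \<gamma> x y) \<and>
             (\<forall>\<psi>. \<psi> \<in> hom L M \<and> continuous_map \<tau>L \<tau>M \<psi> \<and>
                   (\<forall>x\<in>carrier G. \<forall>y\<in>carrier K. \<psi> (\<beta> x y) = \<gamma> x y) \<longrightarrow>
                   (\<forall>z\<in>carrier L. \<psi> z = \<phi> z))))"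

section \<open>Z^I, H = Z^(I), and the dual of H (index set I = UNIV :: 'i set)\<close>

definition ZI_grp :: "('i \<Rightarrow> int) monoid" where
  "ZI_grp = \<lparr>carrier = UNIV, mult = (\<lambda>x y. (\<lambda>i. x i + y i)), one = (\<lambda>i. 0)\<rparr>"

definition ZI_top :: "('i \<Rightarrow> int) topology" where
  "ZI_top = product_topology (\<lambda>i. discrete_topology (UNIV::int set)) UNIV"

definition pairing :: "('i \<Rightarrow> int) \<Rightarrow> ('i \<Rightarrow> int) \<Rightarrow> int" where
  "pairing g x = (\<Sum>i\<in>{i. g i \<noteq> 0}. g i * x i)"

definition H_grp :: "('i \<Rightarrow> int) monoid" where
  "H_grp = \<lparr>carrier = {g. finite {i. g i \<noteq> 0}}, mult = (\<lambda>x y. (\<lambda>i. x i + y i)),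
            one = (\<lambda>i. 0)\<rparr>"

text \<open>Weakest topology on H making every g \<mapsto> pairing g x (x in Z^I) continuous into
  discrete Z: generated by the sets {g \<in> H. pairing g x = k}.\<close>
definition H_top :: "('i \<Rightarrow> int) topology" where
  "H_top = topology_generated_by
     {{g \<in> carrier H_grp. pairing g x = k} | x k. True}"

definition Hhat_grp :: "(('i \<Rightarrow> int) \<Rightarrow> real) monoid" where
  "Hhat_grp = \<lparr>carrier = cont_chars H_grp H_top \<inter> extensional (carrier H_grp),
     mult = (\<lambda>ch \<psi>. restrict (\<lambda>g. frac (ch g + \<psi> g)) (carrier H_grp)),
     one = restrict (\<lambda>g. 0) (carrier H_grp)\<rparr>"

text \<open>I has measurable cardinality iff there is a free (non-principal) countably
  complete ultrafilter on I.\<close>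
definition ulam_measurable :: "'i set \<Rightarrow> bool" where
  "ulam_measurable I \<longleftrightarrow> (\<exists>U :: 'i set set.
     (\<forall>A\<in>U. A \<subseteq> I) \<and> I \<in> U \<and> {} \<notin> U \<and>
     (\<forall>A B. A \<in> U \<and> A \<subseteq> B \<and> B \<subseteq> I \<longrightarrow> B \<in> U) \<and>
     (\<forall>A. A \<subseteq> I \<longrightarrow> A \<in> U \<or> I - A \<in> U) \<and>
     (\<forall>x\<in>I. {x} \<notin> U) \<and>
     (\<forall>F :: nat \<Rightarrow> 'i set. (\<forall>n. F n \<in> U) \<longrightarrow> I \<inter> (\<Inter>n. F n) \<in> U))"

end

theory Submission
  imports Defs
begin

lemma frac_add_frac1[simp]: "frac (frac a + b) = frac (a + (b::real))"
proof -
  have "frac a + b = (a + b) + of_int (- \<lfloor>a\<rfloor>)" by (simp add: frac_def)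
  then show ?thesis by (simp only: frac_add_of_int_right)
qed
lemma frac_add_frac2[simp]: "frac (a + frac b) = frac (a + (b::real))"
proof -
  have "a + frac b = (a + b) + of_int (- \<lfloor>b\<rfloor>)" by (simp add: frac_def)
  then show ?thesis by (simp only: frac_add_of_int_right)
qed
lemma frac_eq_self: "a \<in> {0..<1} \<Longrightarrow> frac a = (a::real)"
  by (simp add: frac_eq)
lemma frac_in01: "frac (a::real) \<in> {0..<1}"
  using frac_lt_1 frac_ge_0 by auto
lemma frac_mult_int_frac: "frac (of_int k * frac a) = frac (of_int k * (a::real))"
proof -
  have "of_int k * a = of_int k * frac a + of_int (k * \<lfloor>a\<rfloor>)"
    by (simp add: frac_def algebra_simps)
  then show ?thesis by (simp only: frac_add_of_int_right)
qed
lemma frac_eq_iff_int: "frac (a::real) = frac b \<longleftrightarrow> a - b \<in> \<int>"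
proof
  assume "frac a = frac b"
  then have "a - b = of_int (\<lfloor>a\<rfloor> - \<lfloor>b\<rfloor>)" by (simp add: frac_def algebra_simps)
  then show "a - b \<in> \<int>" by simp
next
  assume "a - b \<in> \<int>"
  then obtain k where "a - b = of_int k" by (auto elim: Ints_cases)
  then have "a = of_int k + b" by simp
  then show "frac a = frac b" by simp
qed

lemma tnorm_nonneg: "tnorm x \<ge> 0" by (simp add: tnorm_def)
lemma tnorm_le_abs: "tnorm x \<le> \<bar>x\<bar>"
  using round_diff_minimal[of x 0] by (simp add: tnorm_def)
lemma tnorm_min: "tnorm x \<le> \<bar>x - of_int m\<bar>"
  using round_diff_minimal[of x m] by (simp add: tnorm_def)
lemma tnorm_le_half: "tnorm x \<le> 1/2"
  using of_int_round_abs_le[of x] by (simp add: tnorm_def abs_minus_commute)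
lemma tnorm_add_int[simp]: "tnorm (x + of_int k) = tnorm x"
proof -
  have "tnorm (x + of_int k) \<le> tnorm x"
    using tnorm_min[of "x + of_int k" "round x + k"] by (simp add: tnorm_def)
  moreover have "tnorm x \<le> tnorm (x + of_int k)"
    using tnorm_min[of x "round (x + of_int k) - k"] by (simp add: tnorm_def algebra_simps)
  ultimately show ?thesis by simp
qed
lemma tnorm_frac[simp]: "tnorm (frac x) = tnorm x"
  using tnorm_add_int[of x "- \<lfloor>x\<rfloor>"] by (simp add: frac_def)
lemma tnorm_minus[simp]: "tnorm (- x) = tnorm x"
proof -
  have "tnorm (- x) \<le> tnorm x" using tnorm_min[of "-x" "- round x"] by (simp add: tnorm_def)
  moreover have "tnorm x \<le> tnorm (-x)" using tnorm_min[of x "- round (-x)"] by (simp add: tnorm_def)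
  ultimately show ?thesis by simp
qed
lemma tnorm_triangle: "tnorm (x + y) \<le> tnorm x + tnorm y"
proof -
  have "tnorm (x + y) \<le> \<bar>x + y - of_int (round x + round y)\<bar>" by (rule tnorm_min)
  also have "\<dots> \<le> tnorm x + tnorm y" by (simp add: tnorm_def)
  finally show ?thesis .
qed
lemma tnorm_diff_sym: "tnorm (x - y) = tnorm (y - x)"
  by (metis minus_diff_eq tnorm_minus)
lemma tnorm_small: "\<bar>x\<bar> \<le> 1/2 \<Longrightarrow> tnorm x = \<bar>x\<bar>"
proof -
  assume a: "\<bar>x\<bar> \<le> 1/2"
  have "\<bar>x\<bar> \<le> \<bar>x - of_int (round x)\<bar>"
  proof (cases "round x = 0")
    case False
    then have "\<bar>real_of_int (round x)\<bar> \<ge> 1" by linarith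
    then show ?thesis using a by linarith
  qed simp
  then show ?thesis using tnorm_le_abs[of x] by (simp add: tnorm_def)
qed
lemma tnorm_zero_iff: "tnorm x = 0 \<longleftrightarrow> x \<in> \<int>"
proof
  assume "tnorm x = 0" then have "x = of_int (round x)" by (simp add: tnorm_def)
  then show "x \<in> \<int>" by (metis Ints_of_int)
next
  assume "x \<in> \<int>" then obtain k where "x = of_int k" by (auto elim: Ints_cases)
  then show "tnorm x = 0" using tnorm_add_int[of 0 k] by (simp add: tnorm_def)
qed
lemma tnorm_mult_nat: "tnorm (real n * x) \<le> real n * tnorm x"
proof (induction n)
  case 0 then show ?case by (simp add: tnorm_def)
next
  case (Suc n)
  have "tnorm (real (Suc n) * x) = tnorm (real n * x + x)" by (simp add: algebra_simps)
  also have "\<dots> \<le> tnorm (real n * x) + tnorm x" by (rule tnorm_triangle)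
  also have "\<dots> \<le> real (Suc n) * tnorm x" using Suc by (simp add: algebra_simps)
  finally show ?case .
qed

lemma tnorm_multiples:
  assumes n: "n \<ge> 1" and h: "\<And>k::nat. 1 \<le> k \<Longrightarrow> k \<le> n \<Longrightarrow> tnorm (real k * x) \<le> 1/4"
  shows "tnorm x \<le> 1 / (4 * real n)"
proof (rule ccontr)
  assume c: "\<not> ?thesis"
  define s where "s = x - of_int (round x)"
  define r where "r = \<bar>s\<bar>"
  have ts: "tnorm x = r" by (simp add: s_def r_def tnorm_def)
  have s1: "r \<le> 1/4" using h[of 1] n ts by simp
  have spos: "r > 1 / (4 * real n)" using c ts by simp
  have npos: "real n > 0" using n by simp
  have "1 / (4 * real n) > 0" using npos by simp
  then have snz: "r > 0" using spos by linarith
  define f where "f = \<lfloor>1 / (4 * r)\<rfloor>"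
  have f0: "f \<ge> 0" using snz by (simp add: f_def)
  define k where "k = nat f + 1"
  have fl1: "real (nat f) \<le> 1 / (4 * r)" using f0 by (simp add: f_def)
  have fl2: "1 / (4 * r) < real (nat f) + 1" using f0 unfolding f_def by linarith
  have k1: "k \<ge> 1" by (simp add: k_def)
  have a1: "(real (nat f) + 1) * r > 1/4" using fl2 snz by (simp add: field_simps)
  have a2: "real (nat f) * r \<le> 1/4" using fl1 snz by (simp add: field_simps)
  have a3: "(real (nat f) + 1) * r \<le> 1/2" using a2 s1 by (simp add: algebra_simps)
  have "real n * r > 1/4" using spos npos by (simp add: field_simps)
  then have "real (nat f) * r < real n * r" using a2 by linarith
  then have "real (nat f) < real n" using snz by simp
  then have kn: "k \<le> n" unfolding k_def by linarith
  have rk: "real k = real (nat f) + 1" by (simp add: k_def)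
  have "tnorm (real k * x) = tnorm (real k * s + of_int (int k * round x))"
    by (simp add: s_def algebra_simps)
  also have "\<dots> = tnorm (real k * s)" by (rule tnorm_add_int)
  also have "\<dots> = real k * r"
  proof -
    have "\<bar>real k * s\<bar> = real k * r" by (simp add: abs_mult r_def)
    then show ?thesis using a3 rk by (subst tnorm_small) simp_all
  qed
  finally have "tnorm (real k * x) > 1/4" using a1 rk by simp
  then show False using h[OF k1 kn] by simp
qed

lemma tnorm_all_multiples_zero:
  assumes h: "\<And>k::nat. 1 \<le> k \<Longrightarrow> tnorm (real k * x) \<le> 1/4"
  shows "x \<in> \<int>"
proof -
  have b: "tnorm x \<le> 1 / (4 * real n)" if "n \<ge> 1" for n
    using tnorm_multiples[OF that] h by auto
  have "tnorm x \<le> 0"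
  proof (rule ccontr)
    assume "\<not> tnorm x \<le> 0"
    then have p: "tnorm x > 0" by simp
    obtain n0 :: nat where n0: "1 / (4 * tnorm x) < real n0"
      using reals_Archimedean2 by blast
    define n where "n = max n0 1"
    have n1: "n \<ge> 1" and "1 / (4 * tnorm x) < real n" using n0 by (auto simp: n_def)
    then have "tnorm x > 1 / (4 * real n)" using p by (simp add: field_simps)
    then show False using b[OF n1] by simp
  qed
  then show ?thesis using tnorm_nonneg[of x] tnorm_zero_iff by (simp add: order_antisym)
qed

declare frac_lt_1[simp]

lemma istopology_T: "istopology (\<lambda>U::real set. U \<subseteq> {0..<1} \<and> open {x. frac x \<in> U})"
proof -
  have h1: "S \<inter> T \<subseteq> {0..<1} \<and> open {x. frac x \<in> S \<inter> T}"
    if a: "S \<subseteq> {0..<1} \<and> open {x. frac x \<in> S}" "T \<subseteq> {0..<1} \<and> open {x. frac x \<in> T}"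
    for S T :: "real set"
  proof -
    have 1: "{x. frac x \<in> S \<inter> T} = {x. frac x \<in> S} \<inter> {x. frac x \<in> T}" by auto
    have "open ({x. frac x \<in> S} \<inter> {x. frac x \<in> T})" using a by (intro open_Int) blast+
    moreover have "S \<inter> T \<subseteq> {0..<1}" using a by blast
    ultimately show ?thesis by (simp only: 1)
  qed
  have h2: "\<Union>K \<subseteq> {0..<1} \<and> open {x. frac x \<in> \<Union>K}"
    if a: "\<forall>S\<in>K. S \<subseteq> {0..<1} \<and> open {x. frac x \<in> S}" for K :: "real set set"
  proof -
    have 2: "{x. frac x \<in> \<Union>K} = (\<Union>S\<in>K. {x. frac x \<in> S})" by auto
    have "open (\<Union>S\<in>K. {x. frac x \<in> S})" using a by (intro open_UN) blast
    moreover have "\<Union>K \<subseteq> {0..<1}" using a by blast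
    ultimately show ?thesis by (simp only: 2)
  qed
  show ?thesis unfolding istopology_def
    apply (rule conjI)
     apply (intro allI impI)
     apply (rule h1; assumption)
    apply (intro allI impI)
    apply (rule h2; assumption)
    done
qed

lemma openin_T_top: "openin T_top U \<longleftrightarrow> U \<subseteq> {0..<1} \<and> open {x. frac x \<in> U}"
proof -
  have "openin T_top = (\<lambda>U. U \<subseteq> {0..<1} \<and> open {x. frac x \<in> U})"
    unfolding T_top_def by (rule topology_inverse'[OF istopology_T])
  then show ?thesis by simp
qed

lemma topspace_T_top[simp]: "topspace T_top = {0..<1}"
proof -
  have "openin T_top {0..<1}" unfolding openin_T_top using frac_in01 by auto
  then have "{0..<1} \<subseteq> topspace T_top" by (simp add: openin_subset)
  moreover have "topspace T_top \<subseteq> {0..<1}" unfolding topspace_def openin_T_top by auto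
  ultimately show ?thesis by auto
qed

lemma tnorm_diff_frac: "tnorm (frac a - frac b) = tnorm (a - b)"
proof -
  have e: "frac a - frac b = (a - b) + of_int (\<lfloor>b\<rfloor> - \<lfloor>a\<rfloor>)" by (simp add: frac_def)
  show ?thesis by (simp only: e tnorm_add_int)
qed

lemma openin_T_iff:
  "openin T_top U \<longleftrightarrow> U \<subseteq> {0..<1} \<and> (\<forall>x\<in>U. \<exists>e>0. \<forall>y\<in>{0..<1}. tnorm (y - x) < e \<longrightarrow> y \<in> U)"
proof
  assume o: "openin T_top U"
  then have U: "U \<subseteq> {0..<1}" and op: "open {x. frac x \<in> U}" by (auto simp: openin_T_top)
  show "U \<subseteq> {0..<1} \<and> (\<forall>x\<in>U. \<exists>e>0. \<forall>y\<in>{0..<1}. tnorm (y - x) < e \<longrightarrow> y \<in> U)"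
  proof (intro conjI U ballI)
    fix x assume x: "x \<in> U"
    then have fx: "frac x = x" using U by (auto simp: frac_eq)
    then have "x \<in> {x. frac x \<in> U}" using x by simp
    then obtain e where e: "e > 0" "ball x e \<subseteq> {x. frac x \<in> U}" using op open_contains_ball by blast
    show "\<exists>e>0. \<forall>y\<in>{0..<1}. tnorm (y - x) < e \<longrightarrow> y \<in> U"
    proof (intro exI[of _ e] conjI e ballI impI)
      fix y assume y: "y \<in> {0..<1}" and t: "tnorm (y - x) < e"
      define z where "z = y - of_int (round (y - x))"
      have "dist z x = tnorm (y - x)" by (simp add: z_def tnorm_def dist_real_def algebra_simps)
      then have "z \<in> ball x e" using t by (simp add: dist_commute)
      then have "frac z \<in> U" using e by auto
      moreover have "frac z = y"
      proof -
        have "z = y + of_int (- round (y - x))" by (simp add: z_def)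
        then have "frac z = frac y" by (simp only: frac_add_of_int_right)
        then show ?thesis using y by (simp add: frac_eq)
      qed
      ultimately show "y \<in> U" by simp
    qed
  qed
next
  assume r: "U \<subseteq> {0..<1} \<and> (\<forall>x\<in>U. \<exists>e>0. \<forall>y\<in>{0..<1}. tnorm (y - x) < e \<longrightarrow> y \<in> U)"
  have "open {x. frac x \<in> U}"
  proof (rule openI)
    fix z assume "z \<in> {x. frac x \<in> U}"
    then have fz: "frac z \<in> U" by simp
    then obtain e where e: "e > 0" "\<forall>y\<in>{0..<1}. tnorm (y - frac z) < e \<longrightarrow> y \<in> U" using r by blast
    show "\<exists>e>0. ball z e \<subseteq> {x. frac x \<in> U}"
    proof (intro exI[of _ e] conjI e subsetI)
      fix w assume "w \<in> ball z e"
      then have "\<bar>w - z\<bar> < e" by (simp add: dist_real_def abs_minus_commute)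
      then have "tnorm (frac w - frac z) < e" using tnorm_le_abs[of "w - z"] tnorm_diff_frac by simp
      then show "w \<in> {x. frac x \<in> U}" using e frac_in01 by auto
    qed
  qed
  then show "openin T_top U" using r by (simp add: openin_T_top)
qed

definition tball :: "real \<Rightarrow> real \<Rightarrow> real set" where
  "tball x e = {y \<in> {0..<1}. tnorm (y - x) < e}"

lemma openin_tball: "openin T_top (tball x e)"
proof -
  have "\<exists>d>0. \<forall>z\<in>{0..<1}. tnorm (z - y) < d \<longrightarrow> z \<in> tball x e" if y: "y \<in> tball x e" for y
  proof (intro exI[of _ "e - tnorm (y - x)"] conjI ballI impI)
    show "e - tnorm (y - x) > 0" using y by (simp add: tball_def)
    fix z assume z: "z \<in> {0..<1}" "tnorm (z - y) < e - tnorm (y - x)"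
    have "tnorm (z - x) \<le> tnorm (z - y) + tnorm (y - x)"
      using tnorm_triangle[of "z - y" "y - x"] by simp
    then show "z \<in> tball x e" using z by (simp add: tball_def)
  qed
  moreover have "tball x e \<subseteq> {0..<1}" by (auto simp: tball_def)
  ultimately show ?thesis unfolding openin_T_iff by blast
qed

lemma tball_center: "x \<in> {0..<1} \<Longrightarrow> e > 0 \<Longrightarrow> x \<in> tball x e"
  by (simp add: tball_def tnorm_def)

lemma cont_T_iff:
  "continuous_map X T_top f \<longleftrightarrow> (\<forall>x\<in>topspace X. f x \<in> {0..<1}) \<and>
     (\<forall>x\<in>topspace X. \<forall>e>0. \<exists>V. openin X V \<and> x \<in> V \<and> (\<forall>y\<in>V. tnorm (f y - f x) < e))"
proof
  assume c: "continuous_map X T_top f"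
  then have r: "\<forall>x\<in>topspace X. f x \<in> {0..<1}" by (auto simp: continuous_map_def)
  show "(\<forall>x\<in>topspace X. f x \<in> {0..<1}) \<and>
     (\<forall>x\<in>topspace X. \<forall>e>0. \<exists>V. openin X V \<and> x \<in> V \<and> (\<forall>y\<in>V. tnorm (f y - f x) < e))"
  proof (intro conjI r ballI allI impI)
    fix x e assume x: "x \<in> topspace X" and e: "(e::real) > 0"
    have "openin X {y \<in> topspace X. f y \<in> tball (f x) e}"
      using c openin_tball by (auto simp: continuous_map_def)
    then show "\<exists>V. openin X V \<and> x \<in> V \<and> (\<forall>y\<in>V. tnorm (f y - f x) < e)"
      using x e r tball_center[of "f x" e] by (intro exI[of _ "{y \<in> topspace X. f y \<in> tball (f x) e}"]) (auto simp: tball_def)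
  qed
next
  assume a: "(\<forall>x\<in>topspace X. f x \<in> {0..<1}) \<and>
     (\<forall>x\<in>topspace X. \<forall>e>0. \<exists>V. openin X V \<and> x \<in> V \<and> (\<forall>y\<in>V. tnorm (f y - f x) < e))"
  show "continuous_map X T_top f" unfolding continuous_map_def
  proof (intro conjI allI impI)
    show "f \<in> topspace X \<rightarrow> topspace T_top" using a by auto
    fix U assume U: "openin T_top U"
    show "openin X {x \<in> topspace X. f x \<in> U}"
    proof (subst openin_subopen, intro ballI)
      fix x assume x: "x \<in> {x \<in> topspace X. f x \<in> U}"
      then obtain e where e: "e > 0" "\<forall>y\<in>{0..<1}. tnorm (y - f x) < e \<longrightarrow> y \<in> U"
        using U unfolding openin_T_iff by blast
      obtain V where V: "openin X V" "x \<in> V" "\<forall>y\<in>V. tnorm (f y - f x) < e" using a x e by blast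
      have "V \<subseteq> topspace X" using V(1) openin_subset by blast
      then show "\<exists>T. openin X T \<and> x \<in> T \<and> T \<subseteq> {x \<in> topspace X. f x \<in> U}"
        using V e a by (intro exI[of _ V]) auto
    qed
  qed
qed

lemma Hausdorff_T: "Hausdorff_space T_top"
  unfolding Hausdorff_space_def
proof (intro allI impI)
  fix x y assume a: "x \<in> topspace T_top \<and> y \<in> topspace T_top \<and> x \<noteq> y"
  define d where "d = tnorm (y - x)"
  have "d \<noteq> 0"
  proof
    assume "d = 0"
    then have "y - x \<in> \<int>" by (simp add: d_def tnorm_zero_iff)
    then have "frac y = frac x" using frac_eq_iff_int by blast
    then show False using a by (simp add: frac_eq)
  qed
  then have d: "d > 0" using tnorm_nonneg d_def by (metis less_eq_real_def)
  have "disjnt (tball x (d/2)) (tball y (d/2))"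
  unfolding disjnt_def
  proof (rule equals0I)
    fix z assume "z \<in> tball x (d/2) \<inter> tball y (d/2)"
    then have "tnorm (z - x) < d/2" "tnorm (z - y) < d/2" by (auto simp: tball_def)
    moreover have "d \<le> tnorm (z - x) + tnorm (y - z)" using tnorm_triangle[of "z - x" "y - z"] by (simp add: d_def)
    moreover have "tnorm (y - z) = tnorm (z - y)" by (rule tnorm_diff_sym)
    ultimately show False by linarith
  qed
  then show "\<exists>U V. openin T_top U \<and> openin T_top V \<and> x \<in> U \<and> y \<in> V \<and> disjnt U V"
    using a d by (intro exI[of _ "tball x (d/2)"] exI[of _ "tball y (d/2)"]) (auto simp: openin_tball tball_center)
qed

lemma tnorm_mult_int: "tnorm (of_int k * x) \<le> real_of_int \<bar>k\<bar> * tnorm x"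
proof (cases "k \<ge> 0")
  case True
  then show ?thesis using tnorm_mult_nat[of "nat k" x] by simp
next
  case False
  then have "of_int k * x = - (real (nat (-k)) * x)" by simp
  then show ?thesis using tnorm_mult_nat[of "nat (-k)" x] False by simp
qed

lemma cont_T_add:
  assumes f: "continuous_map X T_top f" and g: "continuous_map X T_top g"
  shows "continuous_map X T_top (\<lambda>x. frac (f x + g x))"
  unfolding cont_T_iff
proof (intro conjI ballI allI impI)
  fix x assume x: "x \<in> topspace X"
  show "frac (f x + g x) \<in> {0..<1}" by (rule frac_in01)
  fix e :: real assume e: "e > 0"
  obtain V where V: "openin X V" "x \<in> V" "\<forall>y\<in>V. tnorm (f y - f x) < e/2" using f x e unfolding cont_T_iff
    by (meson half_gt_zero)
  obtain W where W: "openin X W" "x \<in> W" "\<forall>y\<in>W. tnorm (g y - g x) < e/2" using g x e unfolding cont_T_iff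
    by (meson half_gt_zero)
  show "\<exists>V. openin X V \<and> x \<in> V \<and> (\<forall>y\<in>V. tnorm (frac (f y + g y) - frac (f x + g x)) < e)"
  proof (intro exI[of _ "V \<inter> W"] conjI ballI)
    fix y assume y: "y \<in> V \<inter> W"
    have "tnorm (frac (f y + g y) - frac (f x + g x)) = tnorm ((f y - f x) + (g y - g x))"
      by (simp add: tnorm_diff_frac algebra_simps)
    also have "\<dots> \<le> tnorm (f y - f x) + tnorm (g y - g x)" by (rule tnorm_triangle)
    also have "\<dots> < e" using V W y by fastforce
    finally show "tnorm (frac (f y + g y) - frac (f x + g x)) < e" .
  qed (use V W in auto)
qed

lemma cont_T_mult:
  assumes f: "continuous_map X T_top f"
  shows "continuous_map X T_top (\<lambda>x. frac (of_int k * f x))"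
  unfolding cont_T_iff
proof (intro conjI ballI allI impI)
  fix x assume x: "x \<in> topspace X"
  show "frac (of_int k * f x) \<in> {0..<1}" by (rule frac_in01)
  fix e :: real assume e: "e > 0"
  define e' where "e' = e / (real_of_int \<bar>k\<bar> + 1)"
  have e': "e' > 0" using e by (simp add: e'_def add_pos_nonneg)
  obtain V where V: "openin X V" "x \<in> V" "\<forall>y\<in>V. tnorm (f y - f x) < e'" using f x e' unfolding cont_T_iff
    by meson
  show "\<exists>V. openin X V \<and> x \<in> V \<and> (\<forall>y\<in>V. tnorm (frac (of_int k * f y) - frac (of_int k * f x)) < e)"
  proof (intro exI[of _ V] conjI ballI)
    fix y assume y: "y \<in> V"
    have "tnorm (frac (of_int k * f y) - frac (of_int k * f x)) = tnorm (of_int k * (f y - f x))"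
      by (simp add: tnorm_diff_frac algebra_simps)
    also have "\<dots> \<le> real_of_int \<bar>k\<bar> * tnorm (f y - f x)" by (rule tnorm_mult_int)
    also have "\<dots> \<le> real_of_int \<bar>k\<bar> * e'" using V y by (intro mult_left_mono) (auto simp: less_imp_le)
    also have "\<dots> < e" using e by (simp add: e'_def field_simps)
    finally show "tnorm (frac (of_int k * f y) - frac (of_int k * f x)) < e" .
  qed (use V in auto)
qed

lemma cont_T_id: "continuous_map T_top T_top (\<lambda>x. x)" by simp

lemma cont_T_const: "c \<in> {0..<1} \<Longrightarrow> continuous_map X T_top (\<lambda>x. c)"
  by (simp add: continuous_map_const)

lemma cont_T_neg:
  assumes f: "continuous_map X T_top f"
  shows "continuous_map X T_top (\<lambda>x. frac (- f x))"
  using cont_T_mult[OF f, of "-1"] by simp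

lemma T_carrier[simp]: "carrier T_grp = {0..<1}" and T_mult[simp]: "mult T_grp x y = frac (x + y)"
  and T_one[simp]: "one T_grp = 0"
  by (simp_all add: T_grp_def)

lemma comm_group_T: "comm_group T_grp"
proof (rule comm_groupI)
  fix x y z assume "x \<in> carrier T_grp" "y \<in> carrier T_grp" "z \<in> carrier T_grp"
  then show "x \<otimes>\<^bsub>T_grp\<^esub> y \<otimes>\<^bsub>T_grp\<^esub> z = x \<otimes>\<^bsub>T_grp\<^esub> (y \<otimes>\<^bsub>T_grp\<^esub> z)"
    by (simp add: add.assoc)
next
  fix x y assume "x \<in> carrier T_grp" "y \<in> carrier T_grp"
  then show "x \<otimes>\<^bsub>T_grp\<^esub> y = y \<otimes>\<^bsub>T_grp\<^esub> x" by (simp add: add.commute)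
next
  fix x assume "x \<in> carrier T_grp"
  then show "\<one>\<^bsub>T_grp\<^esub> \<otimes>\<^bsub>T_grp\<^esub> x = x" by (simp add: frac_eq)
next
  fix x assume "x \<in> carrier T_grp"
  then show "\<exists>y\<in>carrier T_grp. y \<otimes>\<^bsub>T_grp\<^esub> x = \<one>\<^bsub>T_grp\<^esub>"
    by (intro bexI[of _ "frac (- x)"]) (simp_all add: frac_in01)
qed (auto simp: frac_in01)

lemma group_T: "group T_grp" using comm_group_T comm_group_def by blast

lemma T_inv: "x \<in> {0..<1} \<Longrightarrow> inv\<^bsub>T_grp\<^esub> x = frac (- x)"
  using group_T by (intro group.inv_equality) (simp_all add: frac_in01)

lemma tmul_in: "tmul t k \<in> {0..<1}" by (simp add: tmul_def frac_in01)

lemma T_pow: "x \<in> {0..<1} \<Longrightarrow> x [^]\<^bsub>T_grp\<^esub> (n::nat) = frac (real n * x)"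
proof (induction n)
  case (Suc n)
  then show ?case by (simp add: algebra_simps)
qed simp

lemma hom_T_nat:
  assumes h: "\<phi> \<in> hom G T_grp" and g: "group G" and x: "x \<in> carrier G"
  shows "\<phi> (x [^]\<^bsub>G\<^esub> (n::nat)) = frac (real n * \<phi> x)"
proof (induction n)
  case 0
  have "\<phi> \<one>\<^bsub>G\<^esub> = 0" using hom_one[OF h g group_T] by simp
  then show ?case by simp
next
  case (Suc n)
  have "\<phi> (x [^]\<^bsub>G\<^esub> Suc n) = \<phi> (x [^]\<^bsub>G\<^esub> n \<otimes>\<^bsub>G\<^esub> x)" by simp
  also have "\<dots> = frac (\<phi> (x [^]\<^bsub>G\<^esub> n) + \<phi> x)"
    using h x g by (simp add: hom_mult monoid.nat_pow_closed[OF group.is_monoid[OF g]])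
  also have "\<dots> = frac (real (Suc n) * \<phi> x)" using Suc by (simp add: algebra_simps)
  finally show ?case .
qed

lemma generate_topology_on_finite_basis:
  assumes "generate_topology_on S U" "x \<in> U"
  shows "\<exists>F. finite F \<and> F \<subseteq> S \<and> x \<in> \<Inter>F \<and> \<Inter>F \<subseteq> U"
  using assms
proof (induction arbitrary: x rule: generate_topology_on.induct)
  case Empty then show ?case by simp
next
  case (Int a b)
  have xa: "x \<in> a" and xb: "x \<in> b" using Int.prems by auto
  obtain F1 where "finite F1" "F1 \<subseteq> S" "x \<in> \<Inter>F1" "\<Inter>F1 \<subseteq> a" using Int.IH(1)[OF xa] by blast
  moreover obtain F2 where "finite F2" "F2 \<subseteq> S" "x \<in> \<Inter>F2" "\<Inter>F2 \<subseteq> b" using Int.IH(2)[OF xb] by blast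
  ultimately show ?case by (intro exI[of _ "F1 \<union> F2"]) auto
next
  case (UN K)
  then obtain k where kK: "k \<in> K" and xk: "x \<in> k" by blast
  obtain F where "finite F" "F \<subseteq> S" "x \<in> \<Inter>F" "\<Inter>F \<subseteq> k" using UN.IH[OF kK xk] by blast
  then show ?case using kK by (intro exI[of _ F]) auto
next
  case (Basis s)
  then show ?case by (intro exI[of _ "{s}"]) auto
qed

lemma continuous_map_into_generated:
  assumes sp: "\<And>x. x \<in> topspace X \<Longrightarrow> f x \<in> \<Union>S"
    and op: "\<And>s. s \<in> S \<Longrightarrow> openin X {x \<in> topspace X. f x \<in> s}"
  shows "continuous_map X (topology_generated_by S) f"
  unfolding continuous_map_def
proof (intro conjI allI impI)
  show "f \<in> topspace X \<rightarrow> topspace (topology_generated_by S)" using sp by auto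
  fix U assume "openin (topology_generated_by S) U"
  then have "generate_topology_on S U" by (simp add: openin_topology_generated_by_iff)
  then show "openin X {x \<in> topspace X. f x \<in> U}"
  proof (induction rule: generate_topology_on.induct)
    case Empty then show ?case by simp
  next
    case (Int a b)
    have "{x \<in> topspace X. f x \<in> a \<inter> b} = {x \<in> topspace X. f x \<in> a} \<inter> {x \<in> topspace X. f x \<in> b}" by auto
    then show ?case using Int by auto
  next
    case (UN K)
    have "{x \<in> topspace X. f x \<in> \<Union>K} = \<Union>{{x \<in> topspace X. f x \<in> k} |k. k \<in> K}" by auto
    then show ?case using UN by auto
  next
    case (Basis s) then show ?case using op by simp
  qed
qed

lemma topspace_ZI[simp]: "topspace ZI_top = UNIV"
  by (simp add: ZI_top_def)

lemma ZI_carrier[simp]: "carrier ZI_grp = UNIV" and ZI_mult[simp]: "mult ZI_grp x y = (\<lambda>i. x i + y i)"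
  and ZI_one[simp]: "one ZI_grp = (\<lambda>i. 0)"
  by (simp_all add: ZI_grp_def)

definition cyl :: "'i set \<Rightarrow> ('i \<Rightarrow> int) \<Rightarrow> ('i \<Rightarrow> int) set" where
  "cyl S y = {x. \<forall>i\<in>S. x i = y i}"

lemma openin_cyl: "finite S \<Longrightarrow> openin ZI_top (cyl S y)"
  unfolding ZI_top_def openin_product_topology_alt
proof (intro ballI)
  fix x assume fS: "finite S" and x: "x \<in> cyl S y"
  define U where "U = (\<lambda>i. if i \<in> S then {y i} else (UNIV :: int set))"
  have "{i \<in> UNIV. U i \<noteq> topspace (discrete_topology UNIV)} \<subseteq> S" by (auto simp: U_def)
  then have "finite {i \<in> UNIV. U i \<noteq> topspace (discrete_topology UNIV)}" using fS finite_subset by blast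
  moreover have "x \<in> Pi\<^sub>E UNIV U" using x by (auto simp: U_def cyl_def)
  moreover have "Pi\<^sub>E UNIV U \<subseteq> cyl S y"
  proof
    fix z assume "z \<in> Pi\<^sub>E UNIV U"
    then have "\<forall>i. z i \<in> U i" by (simp add: PiE_iff)
    then show "z \<in> cyl S y" by (simp add: U_def cyl_def) (metis singletonD)
  qed
  ultimately show "\<exists>U. finite {i \<in> UNIV. U i \<noteq> topspace (discrete_topology UNIV)} \<and>
      (\<forall>i\<in>UNIV. openin (discrete_topology UNIV) (U i)) \<and> x \<in> Pi\<^sub>E UNIV U \<and> Pi\<^sub>E UNIV U \<subseteq> cyl S y"
    by (intro exI[of _ U]) auto
qed

lemma cyl_self: "y \<in> cyl S y" by (simp add: cyl_def)

lemma openin_ZI_cyl: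
  assumes "openin ZI_top V" "y \<in> V"
  shows "\<exists>S. finite S \<and> cyl S y \<subseteq> V"
proof -
  obtain U where U: "finite {i \<in> UNIV. U i \<noteq> topspace (discrete_topology (UNIV::int set))}"
     "y \<in> Pi\<^sub>E UNIV U" "Pi\<^sub>E UNIV U \<subseteq> V"
    using assms unfolding ZI_top_def openin_product_topology_alt by blast
  define S where "S = {i \<in> UNIV. U i \<noteq> topspace (discrete_topology (UNIV::int set))}"
  have "cyl S y \<subseteq> Pi\<^sub>E UNIV U"
  proof
    fix x assume x: "x \<in> cyl S y"
    show "x \<in> Pi\<^sub>E UNIV U"
    proof (simp add: PiE_iff, intro allI)
      fix i show "x i \<in> U i"
      proof (cases "i \<in> S")
        case True then show ?thesis using x U(2) by (auto simp: cyl_def PiE_iff)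
      next
        case False then show ?thesis by (simp add: S_def)
      qed
    qed
  qed
  then show ?thesis using U S_def by (intro exI[of _ S]) auto
qed

lemma cont_ZI_finite_dep:
  assumes fS: "finite S" and dep: "\<And>x y. (\<forall>i\<in>S. x i = y i) \<Longrightarrow> F x = F y"
    and sp: "\<And>x. F x \<in> topspace Y"
  shows "continuous_map ZI_top Y F"
  unfolding continuous_map_def
proof (intro conjI allI impI)
  show "F \<in> topspace ZI_top \<rightarrow> topspace Y" using sp by auto
  fix U assume "openin Y U"
  show "openin ZI_top {x \<in> topspace ZI_top. F x \<in> U}"
  proof (subst openin_subopen, intro ballI)
    fix x assume x: "x \<in> {x \<in> topspace ZI_top. F x \<in> U}"
    have "cyl S x \<subseteq> {x \<in> topspace ZI_top. F x \<in> U}"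
    proof
      fix z assume "z \<in> cyl S x"
      then have "F z = F x" using dep by (simp add: cyl_def)
      then show "z \<in> {x \<in> topspace ZI_top. F x \<in> U}" using x by simp
    qed
    then show "\<exists>T. openin ZI_top T \<and> x \<in> T \<and> T \<subseteq> {x \<in> topspace ZI_top. F x \<in> U}"
      using openin_cyl[OF fS, of x] cyl_self[of x S] by (intro exI[of _ "cyl S x"]) simp
  qed
qed

section \<open>H and pairing\<close>

lemma H_carrier: "carrier H_grp = {g. finite {i. g i \<noteq> 0}}" and H_mult[simp]: "mult H_grp x y = (\<lambda>i. x i + y i)"
  and H_one[simp]: "one H_grp = (\<lambda>i. 0)"
  by (simp_all add: H_grp_def)

lemma H_mult_closed: "g \<in> carrier H_grp \<Longrightarrow> h \<in> carrier H_grp \<Longrightarrow> (\<lambda>i. g i + h i) \<in> carrier H_grp"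
proof -
  assume "g \<in> carrier H_grp" "h \<in> carrier H_grp"
  then have "finite ({i. g i \<noteq> 0} \<union> {i. h i \<noteq> 0})" by (simp add: H_carrier)
  moreover have "{i. g i + h i \<noteq> 0} \<subseteq> {i. g i \<noteq> 0} \<union> {i. h i \<noteq> 0}" by auto
  ultimately show ?thesis by (simp add: H_carrier finite_subset)
qed

lemma H_zero_in: "(\<lambda>i. 0) \<in> carrier H_grp" by (simp add: H_carrier)

lemma pairing_sum:
  assumes "finite S" "{i. g i \<noteq> 0} \<subseteq> S"
  shows "pairing g x = (\<Sum>i\<in>S. g i * x i)"
  unfolding pairing_def using assms by (intro sum.mono_neutral_left) auto

lemma pairing_add_left:
  fixes g h :: "'i \<Rightarrow> int"
  assumes "g \<in> carrier H_grp" "h \<in> carrier H_grp"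
  shows "pairing (\<lambda>i. g i + h i) x = pairing g x + pairing h x"
proof -
  define S where "S = {i. g i \<noteq> 0} \<union> {i. h i \<noteq> 0}"
  have fS: "finite S" using assms by (simp add: S_def H_carrier)
  have "pairing (\<lambda>i. g i + h i) x = (\<Sum>i\<in>S. (g i + h i) * x i)" using fS by (intro pairing_sum) (auto simp: S_def)
  also have "\<dots> = (\<Sum>i\<in>S. g i * x i) + (\<Sum>i\<in>S. h i * x i)" by (simp add: algebra_simps sum.distrib)
  also have "(\<Sum>i\<in>S. g i * x i) = pairing g x" using fS by (intro pairing_sum[symmetric]) (auto simp: S_def)
  also have "(\<Sum>i\<in>S. h i * x i) = pairing h x" using fS by (intro pairing_sum[symmetric]) (auto simp: S_def)
  finally show ?thesis .
qed

lemma pairing_add_right: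
  assumes "g \<in> carrier H_grp"
  shows "pairing g (\<lambda>i. x i + y i) = pairing g x + pairing g y"
  unfolding pairing_def by (simp add: algebra_simps sum.distrib)

lemma pairing_zero_right[simp]: "pairing g (\<lambda>i. 0) = 0" by (simp add: pairing_def)
lemma pairing_zero_left[simp]: "pairing (\<lambda>i. 0) x = 0" by (simp add: pairing_def)

lemma tmul_add_int: "tmul t (a + b) = frac (tmul t a + tmul t b)"
  by (simp add: tmul_def algebra_simps)
lemma tmul_add_T: "tmul (frac (s + t)) k = frac (tmul s k + tmul t k)"
  by (simp add: tmul_def frac_mult_int_frac algebra_simps)
lemma tmul_zero_int[simp]: "tmul t 0 = 0" by (simp add: tmul_def)
lemma tmul_zero_T[simp]: "tmul 0 k = 0" by (simp add: tmul_def)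
lemma tmul_one: "t \<in> {0..<1} \<Longrightarrow> tmul t 1 = t" by (simp add: tmul_def frac_eq)

lemma cont_tmul: "continuous_map T_top T_top (\<lambda>t. tmul t k)"
  unfolding tmul_def using cont_T_mult[OF cont_T_id] .

lemma topspace_H_top[simp]: "topspace H_top = carrier H_grp"
proof -
  have "carrier H_grp \<in> {{g \<in> carrier H_grp. pairing g x = k} | x k. True}"
    by (rule CollectI, intro exI[of _ "\<lambda>i. 0"] exI[of _ "0::int"]) simp
  then show ?thesis unfolding H_top_def by auto
qed

lemma openin_H_level: "openin H_top {g \<in> carrier H_grp. pairing g x = k}"
  unfolding H_top_def openin_topology_generated_by_iff
  by (rule generate_topology_on.Basis) blast

lemma cont_H_pairing_fun:
  assumes c: "\<And>g. g \<in> carrier H_grp \<Longrightarrow> c g = F (pairing g x)" and F: "\<And>k. F k \<in> {0..<1}"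
  shows "continuous_map H_top T_top c"
  unfolding continuous_map_def
proof (intro conjI allI impI)
  show "c \<in> topspace H_top \<rightarrow> topspace T_top" using c F by auto
  fix U assume "openin T_top U"
  have "{g \<in> topspace H_top. c g \<in> U} = \<Union>{{g \<in> carrier H_grp. pairing g x = k} | k. F k \<in> U}"
  proof (intro Set.set_eqI iffI)
    fix g assume g: "g \<in> {g \<in> topspace H_top. c g \<in> U}"
    then have "g \<in> {g' \<in> carrier H_grp. pairing g' x = pairing g x}" "F (pairing g x) \<in> U" using c by auto
    then show "g \<in> \<Union>{{g \<in> carrier H_grp. pairing g x = k} | k. F k \<in> U}" by blast
  next
    fix g assume "g \<in> \<Union>{{g \<in> carrier H_grp. pairing g x = k} | k. F k \<in> U}"
    then obtain k where "g \<in> carrier H_grp" "pairing g x = k" "F k \<in> U" by blast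
    then show "g \<in> {g \<in> topspace H_top. c g \<in> U}" using c by simp
  qed
  also have "openin H_top \<dots>" using openin_H_level by auto
  finally show "openin H_top {g \<in> topspace H_top. c g \<in> U}" .
qed

definition gam :: "('i \<Rightarrow> int) \<Rightarrow> real \<Rightarrow> ('i \<Rightarrow> int) \<Rightarrow> real" where
  "gam x t = restrict (\<lambda>g. tmul t (pairing g x)) (carrier H_grp)"

section \<open>The dual group\<close>

lemma Hhat_carrier: "carrier Hhat_grp = cont_chars H_grp H_top \<inter> extensional (carrier H_grp)"
  and Hhat_mult[simp]: "mult Hhat_grp a b = restrict (\<lambda>g. frac (a g + b g)) (carrier H_grp)"
  and Hhat_one[simp]: "one Hhat_grp = restrict (\<lambda>g. 0) (carrier H_grp)"
  by (simp_all add: Hhat_grp_def)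

lemma Hhat_memI:
  assumes ext: "a \<in> extensional (carrier H_grp)"
    and val: "\<And>g. g \<in> carrier H_grp \<Longrightarrow> a g \<in> {0..<1}"
    and hom: "\<And>g h. g \<in> carrier H_grp \<Longrightarrow> h \<in> carrier H_grp \<Longrightarrow> a (\<lambda>i. g i + h i) = frac (a g + a h)"
    and cont: "continuous_map H_top T_top a"
  shows "a \<in> carrier Hhat_grp"
  unfolding Hhat_carrier cont_chars_def hom_def using assms by auto

lemma Hhat_memD:
  assumes "a \<in> carrier Hhat_grp"
  shows "a \<in> extensional (carrier H_grp)" "\<And>g. g \<in> carrier H_grp \<Longrightarrow> a g \<in> {0..<1}"
    "\<And>g h. g \<in> carrier H_grp \<Longrightarrow> h \<in> carrier H_grp \<Longrightarrow> a (\<lambda>i. g i + h i) = frac (a g + a h)"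
    "continuous_map H_top T_top a"
  using assms unfolding Hhat_carrier cont_chars_def hom_def by (auto simp: Pi_iff)

lemma Hhat_eqI:
  assumes "a \<in> carrier Hhat_grp" "b \<in> carrier Hhat_grp" "\<And>g. g \<in> carrier H_grp \<Longrightarrow> a g = b g"
  shows "a = b"
  using Hhat_memD(1)[OF assms(1)] Hhat_memD(1)[OF assms(2)] assms(3) by (rule extensionalityI)

lemma frac_neg_frac: "frac (- frac a) = frac (- (a::real))"
proof -
  have "- frac a = - a + of_int \<lfloor>a\<rfloor>" by (simp add: frac_def)
  then show ?thesis by (simp only: frac_add_of_int_right)
qed

lemma Hhat_mult_closed:
  fixes a b :: "('i \<Rightarrow> int) \<Rightarrow> real"
  assumes a: "a \<in> carrier Hhat_grp" and b: "b \<in> carrier Hhat_grp"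
  shows "restrict (\<lambda>g. frac (a g + b g)) (carrier H_grp) \<in> carrier Hhat_grp"
proof (rule Hhat_memI)
  show "continuous_map H_top T_top (restrict (\<lambda>g. frac (a g + b g)) (carrier H_grp))"
    using cont_T_add[OF Hhat_memD(4)[OF a] Hhat_memD(4)[OF b]]
    by (rule continuous_map_eq) simp
  fix g h :: "'i \<Rightarrow> int" assume g: "g \<in> carrier H_grp" and h: "h \<in> carrier H_grp"
  show "restrict (\<lambda>g. frac (a g + b g)) (carrier H_grp) (\<lambda>i. g i + h i) =
     frac (restrict (\<lambda>g. frac (a g + b g)) (carrier H_grp) g + restrict (\<lambda>g. frac (a g + b g)) (carrier H_grp) h)"
  proof -
    have "restrict (\<lambda>g. frac (a g + b g)) (carrier H_grp) (\<lambda>i. g i + h i) = frac (a (\<lambda>i. g i + h i) + b (\<lambda>i. g i + h i))"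
      using H_mult_closed[OF g h] by simp
    also have "\<dots> = frac (frac (a g + a h) + frac (b g + b h))"
      using Hhat_memD(3)[OF a g h] Hhat_memD(3)[OF b g h] by simp
    also have "\<dots> = frac ((a g + a h) + (b g + b h))" by (simp only: frac_add_frac1 frac_add_frac2)
    also have "\<dots> = frac ((a g + b g) + (a h + b h))" by (simp add: algebra_simps)
    also have "\<dots> = frac (frac (a g + b g) + frac (a h + b h))" by (simp only: frac_add_frac1 frac_add_frac2)
    also have "\<dots> = frac (restrict (\<lambda>g. frac (a g + b g)) (carrier H_grp) g + restrict (\<lambda>g. frac (a g + b g)) (carrier H_grp) h)"
      using g h by simp
    finally show ?thesis .
  qed
qed (auto simp: frac_in01)

lemma Hhat_one_closed: "restrict (\<lambda>g. 0) (carrier H_grp) \<in> carrier Hhat_grp"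
proof (rule Hhat_memI)
  show "continuous_map H_top T_top (restrict (\<lambda>g. 0) (carrier H_grp))"
    by (rule continuous_map_eq[OF cont_T_const[of 0]]) auto
qed (auto simp: H_mult_closed)

lemma Hhat_inv_closed:
  fixes a :: "('i \<Rightarrow> int) \<Rightarrow> real"
  assumes a: "a \<in> carrier Hhat_grp"
  shows "restrict (\<lambda>g. frac (- a g)) (carrier H_grp) \<in> carrier Hhat_grp"
proof (rule Hhat_memI)
  show "continuous_map H_top T_top (restrict (\<lambda>g. frac (- a g)) (carrier H_grp))"
    using cont_T_neg[OF Hhat_memD(4)[OF a]] by (rule continuous_map_eq) simp
  fix g h :: "'i \<Rightarrow> int" assume g: "g \<in> carrier H_grp" and h: "h \<in> carrier H_grp"
  have "frac (- a (\<lambda>i. g i + h i)) = frac (- (a g + a h))"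
    using Hhat_memD(3)[OF a g h] by (simp only: frac_neg_frac)
  also have "\<dots> = frac ((- a g) + (- a h))" by simp
  also have "\<dots> = frac (frac (- a g) + frac (- a h))" by (simp only: frac_add_frac1 frac_add_frac2)
  finally show "restrict (\<lambda>g. frac (- a g)) (carrier H_grp) (\<lambda>i. g i + h i) =
     frac (restrict (\<lambda>g. frac (- a g)) (carrier H_grp) g + restrict (\<lambda>g. frac (- a g)) (carrier H_grp) h)"
    using g h H_mult_closed[OF g h] by simp
qed (auto simp: frac_in01)

lemma comm_group_Hhat: "comm_group (Hhat_grp :: (('i \<Rightarrow> int) \<Rightarrow> real) monoid)"
proof (rule comm_groupI)
  fix x y :: "('i \<Rightarrow> int) \<Rightarrow> real" assume "x \<in> carrier Hhat_grp" "y \<in> carrier Hhat_grp"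
  then show "x \<otimes>\<^bsub>Hhat_grp\<^esub> y \<in> carrier Hhat_grp" by (simp add: Hhat_mult_closed)
next
  show "\<one>\<^bsub>Hhat_grp\<^esub> \<in> carrier Hhat_grp" by (simp add: Hhat_one_closed)
next
  fix x y z :: "('i \<Rightarrow> int) \<Rightarrow> real" assume x: "x \<in> carrier Hhat_grp" and y: "y \<in> carrier Hhat_grp" and z: "z \<in> carrier Hhat_grp"
  show "x \<otimes>\<^bsub>Hhat_grp\<^esub> y \<otimes>\<^bsub>Hhat_grp\<^esub> z = x \<otimes>\<^bsub>Hhat_grp\<^esub> (y \<otimes>\<^bsub>Hhat_grp\<^esub> z)"
    by (rule ext) (simp add: add.assoc)
next
  fix x y :: "('i \<Rightarrow> int) \<Rightarrow> real" assume "x \<in> carrier Hhat_grp" "y \<in> carrier Hhat_grp"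
  show "x \<otimes>\<^bsub>Hhat_grp\<^esub> y = y \<otimes>\<^bsub>Hhat_grp\<^esub> x" by (rule ext) (simp add: add.commute)
next
  fix x :: "('i \<Rightarrow> int) \<Rightarrow> real" assume x: "x \<in> carrier Hhat_grp"
  show "\<one>\<^bsub>Hhat_grp\<^esub> \<otimes>\<^bsub>Hhat_grp\<^esub> x = x"
    unfolding Hhat_mult Hhat_one
    by (rule Hhat_eqI[OF Hhat_mult_closed[OF Hhat_one_closed x] x])
       (use Hhat_memD(2)[OF x] in \<open>simp add: frac_eq\<close>)
next
  fix x :: "('i \<Rightarrow> int) \<Rightarrow> real" assume x: "x \<in> carrier Hhat_grp"
  show "\<exists>y\<in>carrier Hhat_grp. y \<otimes>\<^bsub>Hhat_grp\<^esub> x = \<one>\<^bsub>Hhat_grp\<^esub>"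
  proof (intro bexI[OF _ Hhat_inv_closed[OF x]])
    show "restrict (\<lambda>g. frac (- x g)) (carrier H_grp) \<otimes>\<^bsub>Hhat_grp\<^esub> x = \<one>\<^bsub>Hhat_grp\<^esub>"
      by (rule ext) simp
  qed
qed

lemma group_Hhat: "group (Hhat_grp :: (('i \<Rightarrow> int) \<Rightarrow> real) monoid)" using comm_group_Hhat comm_group_def by blast

lemma Hhat_inv: "a \<in> carrier Hhat_grp \<Longrightarrow> inv\<^bsub>Hhat_grp\<^esub> a = restrict (\<lambda>g. frac (- a g)) (carrier H_grp)"
  using group_Hhat Hhat_inv_closed
  by (intro group.inv_equality) (auto intro!: ext)

section \<open>Topology of the dual\<close>

definition HS :: "(('i \<Rightarrow> int) \<Rightarrow> real) set set" where
  "HS = {{a \<in> carrier Hhat_grp. a g \<in> U} | g U. g \<in> carrier H_grp \<and> openin T_top U}"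

definition Hhat_top :: "(('i \<Rightarrow> int) \<Rightarrow> real) topology" where
  "Hhat_top = topology_generated_by HS"

lemma topspace_Hhat_top[simp]: "topspace Hhat_top = (carrier Hhat_grp :: (('i \<Rightarrow> int) \<Rightarrow> real) set)"
proof -
  have "{a \<in> carrier Hhat_grp. a (\<lambda>i::'i. 0) \<in> {0..<1}} \<in> HS"
    unfolding HS_def using H_zero_in openin_topspace[of T_top]
    by (intro CollectI exI[of _ "\<lambda>i::'i. 0"] exI[of _ "{0..<1::real}"]) simp
  moreover have "carrier Hhat_grp \<subseteq> {a \<in> carrier Hhat_grp. a (\<lambda>i::'i. 0) \<in> {0..<1}}"
    using Hhat_memD(2) H_zero_in by blast
  ultimately have "(carrier Hhat_grp :: (('i \<Rightarrow> int) \<Rightarrow> real) set) \<subseteq> \<Union>HS" by blast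
  moreover have "\<Union>HS \<subseteq> carrier Hhat_grp" unfolding HS_def by auto
  ultimately show ?thesis unfolding Hhat_top_def by auto
qed

lemma openin_HS: "s \<in> HS \<Longrightarrow> openin Hhat_top s"
  unfolding Hhat_top_def openin_topology_generated_by_iff by (rule generate_topology_on.Basis)

lemma cont_ev: "(g :: 'i \<Rightarrow> int) \<in> carrier H_grp \<Longrightarrow> continuous_map Hhat_top T_top (\<lambda>a. a g)"
  unfolding continuous_map_def
proof (intro conjI allI impI)
  assume g: "g \<in> carrier H_grp"
  have "\<And>a. a \<in> carrier Hhat_grp \<Longrightarrow> a g \<in> {0..<1}" using Hhat_memD(2) g by blast
  then show "(\<lambda>a. a g) \<in> topspace Hhat_top \<rightarrow> topspace T_top" by (simp only: Pi_iff topspace_Hhat_top topspace_T_top) blast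
  fix U assume "openin T_top U"
  then have "{a \<in> carrier Hhat_grp. a g \<in> U} \<in> HS" using g unfolding HS_def by blast
  then show "openin Hhat_top {x \<in> topspace Hhat_top. x g \<in> U}" using openin_HS by simp
qed

lemma cont_into_Hhat:
  fixes f :: "'a \<Rightarrow> ('i \<Rightarrow> int) \<Rightarrow> real"
  assumes in_c: "\<And>x. x \<in> topspace X \<Longrightarrow> f x \<in> carrier Hhat_grp"
    and co: "\<And>g. g \<in> carrier H_grp \<Longrightarrow> continuous_map X T_top (\<lambda>x. f x g)"
  shows "continuous_map X Hhat_top f"
  unfolding Hhat_top_def
proof (rule continuous_map_into_generated)
  fix x assume "x \<in> topspace X"
  then show "f x \<in> \<Union>HS" using in_c topspace_Hhat_top unfolding Hhat_top_def by auto
next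
  fix s :: "(('i \<Rightarrow> int) \<Rightarrow> real) set" assume "s \<in> HS"
  then obtain g U where s: "s = {a \<in> carrier Hhat_grp. a g \<in> U}" "g \<in> carrier H_grp" "openin T_top U"
    unfolding HS_def by blast
  have "{x \<in> topspace X. f x \<in> s} = {x \<in> topspace X. f x g \<in> U}" using s in_c by auto
  also have "openin X \<dots>" using co[OF s(2)] s(3) by (simp add: continuous_map_def)
  finally show "openin X {x \<in> topspace X. f x \<in> s}" .
qed

lemma frac_mult_nat_frac: "frac (real k * frac a) = frac (real k * (a::real))"
  using frac_mult_int_frac[of "int k" a] by simp

lemma cont_ev_comp:
  assumes f: "continuous_map X Hhat_top f" and g: "g \<in> carrier H_grp"
  shows "continuous_map X T_top (\<lambda>x. f x g)"
  using continuous_map_compose[OF f cont_ev[OF g]] by (simp add: o_def)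

lemma top_ab_group_Hhat: "top_ab_group (Hhat_grp :: (('i \<Rightarrow> int) \<Rightarrow> real) monoid) Hhat_top"
  unfolding top_ab_group_def
proof (intro conjI comm_group_Hhat topspace_Hhat_top)
  show "continuous_map (prod_topology Hhat_top Hhat_top) Hhat_top
     (\<lambda>p. fst p \<otimes>\<^bsub>(Hhat_grp :: (('i \<Rightarrow> int) \<Rightarrow> real) monoid)\<^esub> snd p)"
  proof (rule cont_into_Hhat)
    fix p :: "(('i \<Rightarrow> int) \<Rightarrow> real) \<times> (('i \<Rightarrow> int) \<Rightarrow> real)"
    assume "p \<in> topspace (prod_topology Hhat_top Hhat_top)"
    then show "fst p \<otimes>\<^bsub>Hhat_grp\<^esub> snd p \<in> carrier Hhat_grp"
      by (auto simp: Hhat_mult_closed)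
  next
    fix g :: "'i \<Rightarrow> int" assume g: "g \<in> carrier H_grp"
    have "continuous_map (prod_topology Hhat_top Hhat_top) T_top (\<lambda>p. frac (fst p g + snd p g))"
      by (intro cont_T_add cont_ev_comp[OF _ g] continuous_map_fst continuous_map_snd)
    then show "continuous_map (prod_topology Hhat_top Hhat_top) T_top (\<lambda>p. (fst p \<otimes>\<^bsub>Hhat_grp\<^esub> snd p) g)"
      using g by simp
  qed
next
  show "continuous_map Hhat_top Hhat_top (\<lambda>x. inv\<^bsub>(Hhat_grp :: (('i \<Rightarrow> int) \<Rightarrow> real) monoid)\<^esub> x)"
  proof (rule cont_into_Hhat)
    fix x :: "('i \<Rightarrow> int) \<Rightarrow> real" assume "x \<in> topspace Hhat_top"
    then show "inv\<^bsub>Hhat_grp\<^esub> x \<in> carrier Hhat_grp" by (simp add: Hhat_inv Hhat_inv_closed)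
  next
    fix g :: "'i \<Rightarrow> int" assume g: "g \<in> carrier H_grp"
    have "continuous_map Hhat_top T_top (\<lambda>x. frac (- x g))"
      by (intro cont_T_neg cont_ev g)
    then show "continuous_map Hhat_top T_top (\<lambda>x. (inv\<^bsub>Hhat_grp\<^esub> x) g)"
      by (rule continuous_map_eq) (use g in \<open>simp add: Hhat_inv\<close>)
  qed
qed

lemma Hausdorff_Hhat: "Hausdorff_space (Hhat_top :: (('i \<Rightarrow> int) \<Rightarrow> real) topology)"
  unfolding Hausdorff_space_def
proof (intro allI impI)
  fix a b :: "('i \<Rightarrow> int) \<Rightarrow> real"
  assume ab: "a \<in> topspace Hhat_top \<and> b \<in> topspace Hhat_top \<and> a \<noteq> b"
  then have a: "a \<in> carrier Hhat_grp" and b: "b \<in> carrier Hhat_grp" by auto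
  obtain g where g: "g \<in> carrier H_grp" "a g \<noteq> b g"
    using Hhat_eqI[OF a b] ab by blast
  obtain U V where UV: "openin T_top U" "openin T_top V" "a g \<in> U" "b g \<in> V" "disjnt U V"
    using Hausdorff_T Hhat_memD(2)[OF a g(1)] Hhat_memD(2)[OF b g(1)] g(2)
    unfolding Hausdorff_space_def by (metis topspace_T_top)
  have o1: "openin Hhat_top {c \<in> carrier Hhat_grp. c g \<in> U}" using UV g by (intro openin_HS) (auto simp: HS_def)
  have o2: "openin Hhat_top {c \<in> carrier Hhat_grp. c g \<in> V}" using UV g by (intro openin_HS) (auto simp: HS_def)
  have "disjnt {c \<in> carrier Hhat_grp. c g \<in> U} {c \<in> carrier Hhat_grp. c g \<in> V}"
    using UV(5) by (auto simp: disjnt_def)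
  then show "\<exists>U V. openin Hhat_top U \<and> openin Hhat_top V \<and> a \<in> U \<and> b \<in> V \<and> disjnt U V"
    using o1 o2 a b UV by blast
qed

lemma Hhat_qc_basis:
  fixes U :: "(('i \<Rightarrow> int) \<Rightarrow> real) set"
  assumes U: "openin Hhat_top U" "\<one>\<^bsub>Hhat_grp\<^esub> \<in> U"
  shows "\<exists>V. quasi_convex Hhat_grp Hhat_top V \<and> V \<subseteq> U \<and>
             (\<exists>W. openin Hhat_top W \<and> \<one>\<^bsub>Hhat_grp\<^esub> \<in> W \<and> W \<subseteq> V)"
proof -
  define one where "one = (\<one>\<^bsub>Hhat_grp\<^esub> :: ('i \<Rightarrow> int) \<Rightarrow> real)"
  have one_c: "one \<in> carrier Hhat_grp" by (simp add: one_def Hhat_one_closed)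
  have one_v: "\<And>g. g \<in> carrier H_grp \<Longrightarrow> one g = 0" by (simp add: one_def)
  obtain F where F: "finite F" "F \<subseteq> HS" "one \<in> \<Inter>F" "\<Inter>F \<subseteq> U"
    using generate_topology_on_finite_basis[of HS U one] U
    unfolding Hhat_top_def openin_topology_generated_by_iff one_def by blast
  have "\<exists>ge. fst ge \<in> carrier H_grp \<and> snd ge > 0 \<and>
          (\<forall>a\<in>carrier Hhat_grp. tnorm (a (fst ge)) < snd ge \<longrightarrow> a \<in> s)" if s: "s \<in> F" for s
  proof -
    obtain g U' where sU: "s = {a \<in> carrier Hhat_grp. a g \<in> U'}" "g \<in> carrier H_grp" "openin T_top U'"
      using s F(2) unfolding HS_def by blast
    have "0 \<in> U'" using F(3) s sU one_v by auto
    then obtain e where e: "e > 0" "\<forall>y\<in>{0..<1}. tnorm (y - 0) < e \<longrightarrow> y \<in> U'"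
      using sU(3) unfolding openin_T_iff by blast
    show ?thesis
    proof (intro exI[of _ "(g, e)"] conjI ballI impI)
      fix a assume a: "a \<in> carrier Hhat_grp" "tnorm (a (fst (g, e))) < snd (g, e)"
      then show "a \<in> s" using e sU Hhat_memD(2)[OF a(1) sU(2)] by auto
    qed (use sU e in auto)
  qed
  then obtain GE where GE: "\<And>s. s \<in> F \<Longrightarrow> fst (GE s) \<in> carrier H_grp \<and> snd (GE s) > 0 \<and>
          (\<forall>a\<in>carrier Hhat_grp. tnorm (a (fst (GE s))) < snd (GE s) \<longrightarrow> a \<in> s)"
    by metis
  define G where "G s = fst (GE s)" for s
  define E where "E s = snd (GE s)" for s
  have G: "\<And>s. s \<in> F \<Longrightarrow> G s \<in> carrier H_grp" and E: "\<And>s. s \<in> F \<Longrightarrow> E s > 0"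
    and GEs: "\<And>s a. s \<in> F \<Longrightarrow> a \<in> carrier Hhat_grp \<Longrightarrow> tnorm (a (G s)) < E s \<Longrightarrow> a \<in> s"
    using GE by (auto simp: G_def E_def)
  define e0 where "e0 = Min (insert 1 (E ` F))"
  have fin: "finite (insert 1 (E ` F))" using F(1) by simp
  have e0pos: "e0 > 0" unfolding e0_def using fin E by (subst Min_gr_iff) auto
  have e0le: "\<And>s. s \<in> F \<Longrightarrow> e0 \<le> E s" unfolding e0_def using fin by (intro Min_le) auto
  obtain n0 :: nat where n0: "1 / e0 < real n0" using reals_Archimedean2 by blast
  define n where "n = max n0 1"
  have n1: "n \<ge> 1" by (simp add: n_def)
  have ne: "1 / e0 < real n" using n0 by (simp add: n_def)
  then have "1 < e0 * real n" using e0pos by (simp add: field_simps)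
  then have ne2: "1 / (4 * real n) < e0" using n1 by (simp add: field_simps)
  define V where "V = {a \<in> carrier Hhat_grp. \<forall>s\<in>F. \<forall>k::nat. 1 \<le> k \<and> k \<le> n \<longrightarrow> tnorm (real k * a (G s)) \<le> 1/4}"
  define W where "W = {a \<in> carrier Hhat_grp. \<forall>s\<in>F. tnorm (a (G s)) < 1 / (4 * real n)}"
  have W_eq: "W = (\<Inter>s\<in>F. {a \<in> carrier Hhat_grp. a (G s) \<in> tball 0 (1 / (4 * real n))}) \<inter> topspace Hhat_top"
    unfolding W_def tball_def using Hhat_memD(2) G by auto
  have W_open: "openin Hhat_top W"
    unfolding W_eq
  proof (rule openin_INT[OF F(1)])
    fix s assume s: "s \<in> F"
    have "{a \<in> carrier Hhat_grp. a (G s) \<in> tball 0 (1 / (4 * real n))} \<in> HS"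
      unfolding HS_def using G[OF s] openin_tball by blast
    then show "openin Hhat_top {a \<in> carrier Hhat_grp. a (G s) \<in> tball 0 (1 / (4 * real n))}"
      by (rule openin_HS)
  qed
  have one_W: "one \<in> W" unfolding W_def using one_c one_v G n1 by (auto simp: tnorm_def)
  have W_V: "W \<subseteq> V"
  proof
    fix a assume a: "a \<in> W"
    have "tnorm (real k * a (G s)) \<le> 1/4" if s: "s \<in> F" and k: "1 \<le> k" "k \<le> n" for s k
    proof -
      have "tnorm (real k * a (G s)) \<le> real k * tnorm (a (G s))" by (rule tnorm_mult_nat)
      also have "\<dots> \<le> real n * (1 / (4 * real n))"
        using a s k unfolding W_def by (intro mult_mono) (auto simp: less_imp_le tnorm_nonneg)
      also have "\<dots> = 1/4" using n1 by simp
      finally show ?thesis .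
    qed
    then show "a \<in> V" using a unfolding V_def W_def by auto
  qed
  have V_U: "V \<subseteq> U"
  proof
    fix a assume a: "a \<in> V"
    have "a \<in> s" if s: "s \<in> F" for s
    proof -
      have "tnorm (a (G s)) \<le> 1 / (4 * real n)"
        using tnorm_multiples[OF n1, of "a (G s)"] a s unfolding V_def by auto
      then have "tnorm (a (G s)) < E s" using ne2 e0le[OF s] by linarith
      then show ?thesis using GEs[OF s] a unfolding V_def by auto
    qed
    then show "a \<in> U" using F(4) by blast
  qed
  have qc: "quasi_convex Hhat_grp Hhat_top V"
    unfolding quasi_convex_def
  proof (intro conjI ballI)
    show "V \<subseteq> carrier Hhat_grp" by (auto simp: V_def)
    fix b assume b: "b \<in> carrier Hhat_grp - V"
    then obtain s k where s: "s \<in> F" and k: "1 \<le> k" "k \<le> n" and big: "tnorm (real k * b (G s)) > 1/4"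
      unfolding V_def by force
    define ch where "ch = (\<lambda>a :: ('i \<Rightarrow> int) \<Rightarrow> real. frac (real k * a (G s)))"
    have "ch \<in> cont_chars Hhat_grp Hhat_top"
      unfolding cont_chars_def
    proof (intro CollectI conjI)
      show "ch \<in> hom Hhat_grp T_grp"
        unfolding hom_def
      proof (intro CollectI conjI ballI)
        show "ch \<in> carrier Hhat_grp \<rightarrow> carrier T_grp" by (simp add: ch_def frac_in01)
        fix x y :: "('i \<Rightarrow> int) \<Rightarrow> real" assume x: "x \<in> carrier Hhat_grp" and y: "y \<in> carrier Hhat_grp"
        have "ch (x \<otimes>\<^bsub>Hhat_grp\<^esub> y) = frac (real k * frac (x (G s) + y (G s)))"
          using G[OF s] by (simp add: ch_def)
        also have "\<dots> = frac (real k * (x (G s) + y (G s)))" by (rule frac_mult_nat_frac)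
        also have "\<dots> = frac (real k * x (G s) + real k * y (G s))" by (simp add: algebra_simps)
        also have "\<dots> = frac (ch x + ch y)" by (simp add: ch_def)
        finally show "ch (x \<otimes>\<^bsub>Hhat_grp\<^esub> y) = ch x \<otimes>\<^bsub>T_grp\<^esub> ch y" by simp
      qed
      show "continuous_map Hhat_top T_top ch"
        using cont_T_mult[OF cont_ev[OF G[OF s]], of "int k"] by (simp add: ch_def)
    qed
    moreover have "\<forall>a\<in>V. tnorm (ch a) \<le> 1/4" using s k by (auto simp: V_def ch_def)
    moreover have "tnorm (ch b) > 1/4" using big by (simp add: ch_def)
    ultimately show "\<exists>ch\<in>cont_chars Hhat_grp Hhat_top. (\<forall>a\<in>V. tnorm (ch a) \<le> 1 / 4) \<and> 1 / 4 < tnorm (ch b)"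
      by blast
  qed
  show ?thesis using qc V_U W_open one_W W_V unfolding one_def by blast
qed

lemma in_Q_Hhat: "in_Q (Hhat_grp :: (('i \<Rightarrow> int) \<Rightarrow> real) monoid) Hhat_top"
  unfolding in_Q_def using top_ab_group_Hhat Hausdorff_Hhat Hhat_qc_basis by blast

lemma tmul_bounds[simp]: "0 \<le> tmul t k" "tmul t k < 1"
  using tmul_in[of t k] by auto

lemma gam_apply: "g \<in> carrier H_grp \<Longrightarrow> gam x t g = tmul t (pairing g x)"
  by (simp add: gam_def)

lemma gam_in: "gam (x :: 'i \<Rightarrow> int) t \<in> carrier Hhat_grp"
proof (rule Hhat_memI)
  show "gam x t \<in> extensional (carrier H_grp)" by (simp add: gam_def)
  show "\<And>g. g \<in> carrier H_grp \<Longrightarrow> gam x t g \<in> {0..<1}" by (simp add: gam_def tmul_in)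
  fix g h :: "'i \<Rightarrow> int" assume g: "g \<in> carrier H_grp" and h: "h \<in> carrier H_grp"
  show "gam x t (\<lambda>i. g i + h i) = frac (gam x t g + gam x t h)"
    using g h H_mult_closed[OF g h] by (simp add: gam_def pairing_add_left tmul_add_int)
next
  show "continuous_map H_top T_top (gam x t)"
    by (rule cont_H_pairing_fun[where F = "\<lambda>k. tmul t k" and x = x]) (simp_all add: gam_def tmul_in)
qed

lemma pairing_vanish: "(\<And>i. g i \<noteq> 0 \<Longrightarrow> x i = 0) \<Longrightarrow> pairing g x = 0"
  unfolding pairing_def by (intro sum.neutral) auto

lemma gam_hom_T: "gam (x :: 'i \<Rightarrow> int) \<in> hom T_grp Hhat_grp"
  unfolding hom_def
proof (intro CollectI conjI ballI)
  show "gam x \<in> carrier T_grp \<rightarrow> carrier Hhat_grp" using gam_in by auto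
qed (rule ext, simp add: gam_def tmul_add_T)

lemma gam_cont_T: "continuous_map T_top Hhat_top (gam (x :: 'i \<Rightarrow> int))"
proof (rule cont_into_Hhat)
  show "\<And>t. t \<in> topspace T_top \<Longrightarrow> gam x t \<in> carrier Hhat_grp" by (rule gam_in)
  fix g :: "'i \<Rightarrow> int" assume g: "g \<in> carrier H_grp"
  show "continuous_map T_top T_top (\<lambda>t. gam x t g)"
    using cont_tmul[of "pairing g x"] g by (simp add: gam_apply)
qed

lemma gam_hom_ZI: "(\<lambda>x :: 'i \<Rightarrow> int. gam x t) \<in> hom ZI_grp Hhat_grp"
  unfolding hom_def
proof (intro CollectI conjI ballI)
  show "(\<lambda>x. gam x t) \<in> carrier ZI_grp \<rightarrow> carrier Hhat_grp" using gam_in by auto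
qed (rule ext, simp add: gam_def pairing_add_right tmul_add_int)

lemma gam_cont_ZI: "continuous_map ZI_top Hhat_top (\<lambda>x :: 'i \<Rightarrow> int. gam x t)"
proof (rule cont_into_Hhat)
  show "\<And>x. x \<in> topspace ZI_top \<Longrightarrow> gam x t \<in> carrier Hhat_grp" by (rule gam_in)
  fix g :: "'i \<Rightarrow> int" assume g: "g \<in> carrier H_grp"
  have fin: "finite {i. g i \<noteq> 0}" using g by (simp add: H_carrier)
  have dep: "gam x t g = gam y t g" if "\<forall>i\<in>{i. g i \<noteq> 0}. x i = y i" for x y :: "'i \<Rightarrow> int"
  proof -
    have "pairing g x = pairing g y" using that unfolding pairing_def by (intro sum.cong) auto
    then show ?thesis using g by (simp add: gam_apply)
  qed
  have sp: "gam x t g \<in> topspace T_top" for x :: "'i \<Rightarrow> int"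
    using g tmul_in[of t "pairing g x"] by (simp only: gam_apply topspace_T_top)
  show "continuous_map ZI_top T_top (\<lambda>x. gam x t g)" by (rule cont_ZI_finite_dep[OF fin dep sp])
qed

lemma gam_cont_bihom: "cont_bihom ZI_grp ZI_top T_grp T_top Hhat_grp Hhat_top (gam :: ('i \<Rightarrow> int) \<Rightarrow> real \<Rightarrow> _)"
  unfolding cont_bihom_def
proof (intro conjI ballI allI impI gam_hom_T gam_cont_T gam_hom_ZI gam_cont_ZI)
  fix U :: "(('i \<Rightarrow> int) \<Rightarrow> real) set"
  assume U: "openin Hhat_top U \<and> \<one>\<^bsub>Hhat_grp\<^esub> \<in> U"
  define one where "one = (\<one>\<^bsub>Hhat_grp\<^esub> :: ('i \<Rightarrow> int) \<Rightarrow> real)"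
  have one_v: "\<And>g. g \<in> carrier H_grp \<Longrightarrow> one g = 0" by (simp add: one_def)
  obtain F where F: "finite F" "F \<subseteq> HS" "one \<in> \<Inter>F" "\<Inter>F \<subseteq> U"
    using generate_topology_on_finite_basis[of HS U one] U
    unfolding Hhat_top_def openin_topology_generated_by_iff one_def by blast
  have "\<exists>g. g \<in> carrier H_grp \<and> (\<forall>a\<in>carrier Hhat_grp. a g = 0 \<longrightarrow> a \<in> s)" if s: "s \<in> F" for s
  proof -
    obtain g U' where sU: "s = {a \<in> carrier Hhat_grp. a g \<in> U'}" "g \<in> carrier H_grp" "openin T_top U'"
      using s F(2) unfolding HS_def by blast
    have "0 \<in> U'" using F(3) s sU one_v by auto
    then show ?thesis using sU by auto
  qed
  then obtain G where G: "\<And>s. s \<in> F \<Longrightarrow> G s \<in> carrier H_grp"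
     and GZ: "\<And>s a. s \<in> F \<Longrightarrow> a \<in> carrier Hhat_grp \<Longrightarrow> a (G s) = 0 \<Longrightarrow> a \<in> s"
    by metis
  define S0 where "S0 = (\<Union>s\<in>F. {i. G s i \<noteq> 0})"
  have fS0: "finite S0" unfolding S0_def using F(1) G by (auto simp: H_carrier)
  show "\<exists>V W. openin ZI_top V \<and> \<one>\<^bsub>ZI_grp\<^esub> \<in> V \<and> openin T_top W \<and> \<one>\<^bsub>T_grp\<^esub> \<in> W \<and>
              (\<forall>x\<in>V. \<forall>y\<in>W. gam x y \<in> U)"
  proof (intro exI[of _ "cyl S0 (\<lambda>i. 0)"] exI[of _ "{0..<1::real}"] conjI ballI)
    show "openin ZI_top (cyl S0 (\<lambda>i. 0))" by (rule openin_cyl[OF fS0])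
    show "\<one>\<^bsub>ZI_grp\<^esub> \<in> cyl S0 (\<lambda>i. 0)" by (simp add: cyl_def)
    show "openin T_top {0..<1}" using openin_topspace[of T_top] by simp
    show "\<one>\<^bsub>T_grp\<^esub> \<in> {0..<1::real}" by simp
    fix x t assume x: "x \<in> cyl S0 (\<lambda>i. 0)" and t: "t \<in> {0..<1::real}"
    have "gam x t \<in> s" if s: "s \<in> F" for s
    proof (rule GZ[OF s gam_in])
      have "pairing (G s) x = 0" using x s by (intro pairing_vanish) (auto simp: cyl_def S0_def)
      then show "gam x t (G s) = 0" using G[OF s] by (simp add: gam_apply)
    qed
    then show "gam x t \<in> U" using F(4) by blast
  qed
qed

section \<open>Transport of structures along an injection\<close>

definition tr_grp :: "('a \<Rightarrow> 'b) \<Rightarrow> 'a monoid \<Rightarrow> 'b monoid" where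
  "tr_grp f G = \<lparr>carrier = f ` carrier G, mult = (\<lambda>a b. f (inv_into UNIV f a \<otimes>\<^bsub>G\<^esub> inv_into UNIV f b)), one = f \<one>\<^bsub>G\<^esub>\<rparr>"

definition tr_top :: "('a \<Rightarrow> 'b) \<Rightarrow> 'a topology \<Rightarrow> 'b topology" where
  "tr_top f X = topology (\<lambda>V. V \<subseteq> f ` topspace X \<and> openin X {x \<in> topspace X. f x \<in> V})"

lemma istopology_tr: "istopology (\<lambda>V. V \<subseteq> f ` topspace X \<and> openin X {x \<in> topspace X. f x \<in> V})"
proof -
  have h1: "S \<inter> T \<subseteq> f ` topspace X \<and> openin X {x \<in> topspace X. f x \<in> S \<inter> T}"
    if "S \<subseteq> f ` topspace X \<and> openin X {x \<in> topspace X. f x \<in> S}"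
       "T \<subseteq> f ` topspace X \<and> openin X {x \<in> topspace X. f x \<in> T}" for S T
  proof -
    have "{x \<in> topspace X. f x \<in> S \<inter> T} = {x \<in> topspace X. f x \<in> S} \<inter> {x \<in> topspace X. f x \<in> T}" by auto
    then show ?thesis using that by auto
  qed
  have h2: "\<Union>K \<subseteq> f ` topspace X \<and> openin X {x \<in> topspace X. f x \<in> \<Union>K}"
    if "\<forall>S\<in>K. S \<subseteq> f ` topspace X \<and> openin X {x \<in> topspace X. f x \<in> S}" for K
  proof -
    have "{x \<in> topspace X. f x \<in> \<Union>K} = \<Union>{{x \<in> topspace X. f x \<in> S} | S. S \<in> K}" by auto
    moreover have "openin X (\<Union>{{x \<in> topspace X. f x \<in> S} | S. S \<in> K})" using that by auto
    ultimately show ?thesis using that by auto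
  qed
  show ?thesis unfolding istopology_def
    apply (rule conjI)
     apply (intro allI impI)
     apply (rule h1; assumption)
    apply (intro allI impI)
    apply (rule h2; assumption)
    done
qed

lemma openin_tr: "openin (tr_top f X) V \<longleftrightarrow> V \<subseteq> f ` topspace X \<and> openin X {x \<in> topspace X. f x \<in> V}"
proof -
  have "openin (tr_top f X) = (\<lambda>V. V \<subseteq> f ` topspace X \<and> openin X {x \<in> topspace X. f x \<in> V})"
    unfolding tr_top_def by (rule topology_inverse'[OF istopology_tr])
  then show ?thesis by simp
qed

lemma topspace_tr[simp]: "topspace (tr_top f X) = f ` topspace X"
proof -
  have "{x \<in> topspace X. f x \<in> f ` topspace X} = topspace X" by auto
  then have "openin (tr_top f X) (f ` topspace X)" unfolding openin_tr by auto
  then have "f ` topspace X \<subseteq> topspace (tr_top f X)" by (simp add: openin_subset)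
  moreover have "topspace (tr_top f X) \<subseteq> f ` topspace X" unfolding topspace_def openin_tr by auto
  ultimately show ?thesis by auto
qed

lemma openin_tr_image: "inj f \<Longrightarrow> openin X U \<Longrightarrow> openin (tr_top f X) (f ` U)"
proof -
  assume f: "inj f" and U: "openin X U"
  have "U \<subseteq> topspace X" using U openin_subset by blast
  then have "{x \<in> topspace X. f x \<in> f ` U} = U" using f by (auto simp: inj_image_mem_iff)
  then show ?thesis using U \<open>U \<subseteq> topspace X\<close> unfolding openin_tr by auto
qed

lemma tr_cont_to:
  assumes "continuous_map Y X k"
  shows "continuous_map Y (tr_top f X) (\<lambda>y. f (k y))"
  unfolding continuous_map_def
proof (intro conjI allI impI)
  show "(\<lambda>y. f (k y)) \<in> topspace Y \<rightarrow> topspace (tr_top f X)"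
    using assms by (auto simp: continuous_map_def)
  fix V assume "openin (tr_top f X) V"
  then have o: "openin X {x \<in> topspace X. f x \<in> V}" by (simp add: openin_tr)
  have "{y \<in> topspace Y. f (k y) \<in> V} = {y \<in> topspace Y. k y \<in> {x \<in> topspace X. f x \<in> V}}"
    using assms by (auto simp: continuous_map_def)
  then show "openin Y {y \<in> topspace Y. f (k y) \<in> V}" using assms o by (auto simp: continuous_map_def)
qed

lemma tr_cont_from:
  assumes f: "inj f" and h: "continuous_map Y (tr_top f X) h"
  shows "continuous_map Y X (\<lambda>y. inv_into UNIV f (h y))"
  unfolding continuous_map_def
proof (intro conjI allI impI)
  have hs: "\<And>y. y \<in> topspace Y \<Longrightarrow> h y \<in> f ` topspace X" using h by (auto simp: continuous_map_def)
  show "(\<lambda>y. inv_into UNIV f (h y)) \<in> topspace Y \<rightarrow> topspace X"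
  proof
    fix y assume "y \<in> topspace Y"
    then obtain x' where "x' \<in> topspace X" "h y = f x'" using hs by blast
    then show "inv_into UNIV f (h y) \<in> topspace X" using f by simp
  qed
  fix U assume U: "openin X U"
  have "inv_into UNIV f (h y) \<in> U \<longleftrightarrow> h y \<in> f ` U" if y: "y \<in> topspace Y" for y
  proof -
    obtain x' where "h y = f x'" using hs[OF y] by blast
    then show ?thesis using f by (simp add: inj_image_mem_iff)
  qed
  then have "{y \<in> topspace Y. inv_into UNIV f (h y) \<in> U} = {y \<in> topspace Y. h y \<in> f ` U}"
    by auto
  then show "openin Y {y \<in> topspace Y. inv_into UNIV f (h y) \<in> U}"
    using h openin_tr_image[OF f U] by (auto simp: continuous_map_def)
qed

lemma tr_Hausdorff:
  assumes f: "inj f" and H: "Hausdorff_space X"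
  shows "Hausdorff_space (tr_top f X)"
  unfolding Hausdorff_space_def
proof (intro allI impI)
  fix a b assume ab: "a \<in> topspace (tr_top f X) \<and> b \<in> topspace (tr_top f X) \<and> a \<noteq> b"
  then obtain a' b' where a': "a' \<in> topspace X" "a = f a'" and b': "b' \<in> topspace X" "b = f b'" by auto
  then have "a' \<noteq> b'" using ab by auto
  then obtain U V where UV: "openin X U" "openin X V" "a' \<in> U" "b' \<in> V" "disjnt U V"
    using H a' b' unfolding Hausdorff_space_def by blast
  have "disjnt (f ` U) (f ` V)" using UV(5) f unfolding disjnt_def inj_def by blast
  then show "\<exists>U V. openin (tr_top f X) U \<and> openin (tr_top f X) V \<and> a \<in> U \<and> b \<in> V \<and> disjnt U V"
    using openin_tr_image[OF f UV(1)] openin_tr_image[OF f UV(2)] UV a' b' by blast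
qed

lemma tr_carrier[simp]: "carrier (tr_grp f G) = f ` carrier G"
  and tr_mult[simp]: "mult (tr_grp f G) a b = f (inv_into UNIV f a \<otimes>\<^bsub>G\<^esub> inv_into UNIV f b)"
  and tr_one[simp]: "one (tr_grp f G) = f \<one>\<^bsub>G\<^esub>"
  by (simp_all add: tr_grp_def)

lemma tr_comm_group:
  assumes f: "inj f" and G: "comm_group G"
  shows "comm_group (tr_grp f G)"
proof -
  interpret comm_group G by (rule G)
  show ?thesis
  proof (rule comm_groupI)
    fix x y assume "x \<in> carrier (tr_grp f G)" "y \<in> carrier (tr_grp f G)"
    then show "x \<otimes>\<^bsub>tr_grp f G\<^esub> y \<in> carrier (tr_grp f G)" using f by auto
  next
    show "\<one>\<^bsub>tr_grp f G\<^esub> \<in> carrier (tr_grp f G)" by simp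
  next
    fix x y z assume "x \<in> carrier (tr_grp f G)" "y \<in> carrier (tr_grp f G)" "z \<in> carrier (tr_grp f G)"
    then show "x \<otimes>\<^bsub>tr_grp f G\<^esub> y \<otimes>\<^bsub>tr_grp f G\<^esub> z = x \<otimes>\<^bsub>tr_grp f G\<^esub> (y \<otimes>\<^bsub>tr_grp f G\<^esub> z)"
      using f by (auto simp: m_assoc)
  next
    fix x y assume "x \<in> carrier (tr_grp f G)" "y \<in> carrier (tr_grp f G)"
    then show "x \<otimes>\<^bsub>tr_grp f G\<^esub> y = y \<otimes>\<^bsub>tr_grp f G\<^esub> x" using f by (auto simp: m_comm)
  next
    fix x assume "x \<in> carrier (tr_grp f G)"
    then show "\<one>\<^bsub>tr_grp f G\<^esub> \<otimes>\<^bsub>tr_grp f G\<^esub> x = x" using f by auto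
  next
    fix x assume "x \<in> carrier (tr_grp f G)"
    then obtain x' where x': "x' \<in> carrier G" "x = f x'" by auto
    show "\<exists>y\<in>carrier (tr_grp f G). y \<otimes>\<^bsub>tr_grp f G\<^esub> x = \<one>\<^bsub>tr_grp f G\<^esub>"
      using x' f by (intro bexI[of _ "f (inv\<^bsub>G\<^esub> x')"]) auto
  qed
qed

lemma tr_inv:
  assumes f: "inj f" and G: "comm_group G" and x: "x' \<in> carrier G"
  shows "inv\<^bsub>tr_grp f G\<^esub> (f x') = f (inv\<^bsub>G\<^esub> x')"
proof -
  interpret G: comm_group G by (rule G)
  interpret M: comm_group "tr_grp f G" by (rule tr_comm_group[OF f G])
  show ?thesis using f x by (intro M.inv_equality) auto
qed

lemma tr_hom_to:
  assumes "h \<in> hom K G" and f: "inj f"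
  shows "(\<lambda>z. f (h z)) \<in> hom K (tr_grp f G)"
  using assms unfolding hom_def by auto

lemma tr_in_Q:
  assumes f: "inj f" and Q: "in_Q G \<tau>"
  shows "in_Q (tr_grp f G) (tr_top f \<tau>)"
proof -
  have tg: "top_ab_group G \<tau>" and H: "Hausdorff_space \<tau>"
    and qb: "\<And>U. openin \<tau> U \<Longrightarrow> \<one>\<^bsub>G\<^esub> \<in> U \<Longrightarrow> \<exists>V. quasi_convex G \<tau> V \<and> V \<subseteq> U \<and>
             (\<exists>W. openin \<tau> W \<and> \<one>\<^bsub>G\<^esub> \<in> W \<and> W \<subseteq> V)"
    using Q unfolding in_Q_def by blast+
  have cg: "comm_group G" and ts: "topspace \<tau> = carrier G"
    and cm: "continuous_map (prod_topology \<tau> \<tau>) \<tau> (\<lambda>p. fst p \<otimes>\<^bsub>G\<^esub> snd p)"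
    and ci: "continuous_map \<tau> \<tau> (\<lambda>x. inv\<^bsub>G\<^esub> x)"
    using tg unfolding top_ab_group_def by blast+
  let ?M = "tr_grp f G" and ?T = "tr_top f \<tau>"
  have tsM: "topspace ?T = carrier ?M" using ts by simp
  have cmM: "continuous_map (prod_topology ?T ?T) ?T (\<lambda>p. fst p \<otimes>\<^bsub>?M\<^esub> snd p)"
  proof -
    have c1: "continuous_map (prod_topology ?T ?T) (prod_topology \<tau> \<tau>)
               (\<lambda>p. (inv_into UNIV f (fst p), inv_into UNIV f (snd p)))"
      by (intro continuous_map_pairedI tr_cont_from[OF f] continuous_map_fst continuous_map_snd)
    have "continuous_map (prod_topology ?T ?T) \<tau>
            (\<lambda>p. inv_into UNIV f (fst p) \<otimes>\<^bsub>G\<^esub> inv_into UNIV f (snd p))"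
      using continuous_map_compose[OF c1 cm] by (simp add: o_def)
    from tr_cont_to[OF this, of f] show ?thesis by simp
  qed
  have ciM: "continuous_map ?T ?T (\<lambda>x. inv\<^bsub>?M\<^esub> x)"
  proof -
    have "continuous_map ?T \<tau> (\<lambda>x. inv\<^bsub>G\<^esub> (inv_into UNIV f x))"
      using continuous_map_compose[OF tr_cont_from[OF f continuous_map_id] ci] by (simp add: o_def)
    from tr_cont_to[OF this, of f] show ?thesis
    proof (rule continuous_map_eq)
      fix x assume "x \<in> topspace ?T"
      then obtain x' where x': "x' \<in> carrier G" "x = f x'" using ts by auto
      then show "f (inv\<^bsub>G\<^esub> (inv_into UNIV f x)) = inv\<^bsub>?M\<^esub> x"
        using tr_inv[OF f cg x'(1)] f by simp
    qed
  qed
  have qbM: "\<exists>V. quasi_convex ?M ?T V \<and> V \<subseteq> U \<and> (\<exists>W. openin ?T W \<and> \<one>\<^bsub>?M\<^esub> \<in> W \<and> W \<subseteq> V)"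
    if U: "openin ?T U" "\<one>\<^bsub>?M\<^esub> \<in> U" for U
  proof -
    define U' where "U' = {x \<in> topspace \<tau>. f x \<in> U}"
    have U'o: "openin \<tau> U'" using U(1) by (simp add: openin_tr U'_def)
    have one': "\<one>\<^bsub>G\<^esub> \<in> U'" using U(2) ts cg unfolding U'_def
      by (simp add: comm_group_def group.is_monoid monoid.one_closed)
    obtain V W where VW: "quasi_convex G \<tau> V" "V \<subseteq> U'" "openin \<tau> W" "\<one>\<^bsub>G\<^esub> \<in> W" "W \<subseteq> V"
      using qb[OF U'o one'] by blast
    have Vc: "V \<subseteq> carrier G" using VW(1) by (simp add: quasi_convex_def)
    have "quasi_convex ?M ?T (f ` V)"
      unfolding quasi_convex_def
    proof (intro conjI ballI)
      show "f ` V \<subseteq> carrier ?M" using Vc by auto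
      fix b assume b: "b \<in> carrier ?M - f ` V"
      then obtain b' where b': "b' \<in> carrier G" "b = f b'" "b' \<notin> V" by auto
      then obtain ch where ch: "ch \<in> cont_chars G \<tau>" "\<forall>a\<in>V. tnorm (ch a) \<le> 1/4" "tnorm (ch b') > 1/4"
        using VW(1) unfolding quasi_convex_def by blast
      define ch' where "ch' = (\<lambda>x. ch (inv_into UNIV f x))"
      have "ch' \<in> cont_chars ?M ?T"
        unfolding cont_chars_def
      proof (intro CollectI conjI)
        show "ch' \<in> hom ?M T_grp"
          using ch(1) f unfolding cont_chars_def hom_def ch'_def by auto
        show "continuous_map ?T T_top ch'"
          using continuous_map_compose[OF tr_cont_from[OF f continuous_map_id]] ch(1)
          unfolding cont_chars_def ch'_def by (auto simp: o_def)
      qed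
      moreover have "\<forall>a\<in>f ` V. tnorm (ch' a) \<le> 1/4" using ch(2) f by (auto simp: ch'_def)
      moreover have "tnorm (ch' b) > 1/4" using ch(3) b' f by (simp add: ch'_def)
      ultimately show "\<exists>ch\<in>cont_chars ?M ?T. (\<forall>a\<in>f ` V. tnorm (ch a) \<le> 1 / 4) \<and> 1 / 4 < tnorm (ch b)"
        by blast
    qed
    moreover have "f ` V \<subseteq> U" using VW(2) by (auto simp: U'_def)
    moreover have "openin ?T (f ` W)" by (rule openin_tr_image[OF f VW(3)])
    moreover have "\<one>\<^bsub>?M\<^esub> \<in> f ` W" using VW(4) by simp
    moreover have "f ` W \<subseteq> f ` V" using VW(5) by auto
    ultimately show ?thesis by blast
  qed
  show ?thesis
    unfolding in_Q_def top_ab_group_def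
    using tr_comm_group[OF f cg] tsM cmM ciM tr_Hausdorff[OF f H] qbM by blast
qed

lemma hom_TT_nat:
  assumes h: "\<phi> \<in> hom T_grp T_grp" and x: "x \<in> {0..<1}"
  shows "\<phi> (frac (real n * x)) = frac (real n * \<phi> x)"
  using hom_T_nat[OF h group_T, of x n] x by (simp add: T_pow)

lemma int_abs_lt1: "(k::int) = 0" if "\<bar>real_of_int k\<bar> < 1" using that by linarith

lemma T_endo_class:
  assumes h: "\<phi> \<in> hom T_grp T_grp" and dpos: "\<delta> > 0"
    and small: "\<And>t. t \<in> {0..<1} \<Longrightarrow> tnorm t < \<delta> \<Longrightarrow> tnorm (\<phi> t) < 1/8"
  shows "\<exists>c::int. \<forall>t\<in>{0..<1}. \<phi> t = frac (of_int c * t)"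
proof -
  define d where "d = min \<delta> (1/2)"
  have d0: "d > 0" and dd: "d \<le> \<delta>" and d2: "d \<le> 1/2" using dpos by (auto simp: d_def)
  have hv: "\<And>t. t \<in> {0..<1} \<Longrightarrow> \<phi> t \<in> {0..<1}" using h unfolding hom_def by auto
  have hm: "\<And>s t. s \<in> {0..<1} \<Longrightarrow> t \<in> {0..<1} \<Longrightarrow> \<phi> (frac (s + t)) = frac (\<phi> s + \<phi> t)"
    using h unfolding hom_def by auto
  define \<rho> where "\<rho> y = \<phi> y - of_int (round (\<phi> y))" for y
  have \<rho>_int: "\<phi> y - \<rho> y \<in> \<int>" for y by (simp add: \<rho>_def)
  have \<rho>_small: "\<bar>\<rho> y\<bar> < 1/8" if "0 \<le> y" "y < d" for y
  proof -
    have "y \<in> {0..<1}" using that d2 by auto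
    moreover have "tnorm y < \<delta>" using tnorm_le_abs[of y] that dd by auto
    ultimately have "tnorm (\<phi> y) < 1/8" by (rule small)
    then show ?thesis by (simp add: \<rho>_def tnorm_def)
  qed
  have \<rho>_add: "\<rho> (y + z) = \<rho> y + \<rho> z" if "0 \<le> y" "0 \<le> z" "y + z < d" for y z
  proof -
    have y1: "y \<in> {0..<1}" and z1: "z \<in> {0..<1}" and yz1: "y + z \<in> {0..<1}" using that d2 by auto
    have "\<phi> (y + z) = frac (\<phi> y + \<phi> z)" using hm[OF y1 z1] yz1 by (simp add: frac_eq)
    then have "\<phi> (y + z) - (\<phi> y + \<phi> z) \<in> \<int>"
      by (metis frac_eq_iff_int frac_frac)
    then have "(\<phi> (y + z) - (\<phi> y + \<phi> z)) - (\<phi> (y + z) - \<rho> (y + z)) + (\<phi> y - \<rho> y) + (\<phi> z - \<rho> z) \<in> \<int>"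
      by (rule Ints_add[OF Ints_add[OF Ints_diff[OF _ \<rho>_int] \<rho>_int] \<rho>_int])
    then have "\<rho> (y + z) - \<rho> y - \<rho> z \<in> \<int>" by (simp add: algebra_simps)
    then obtain k where k: "\<rho> (y + z) - \<rho> y - \<rho> z = of_int k" by (auto elim: Ints_cases)
    have "\<bar>real_of_int k\<bar> < 1"
      using \<rho>_small[of "y + z"] \<rho>_small[of y] \<rho>_small[of z] that k by auto
    then have "k = 0" by (rule int_abs_lt1)
    then show ?thesis using k by simp
  qed
  have \<rho>_mult: "\<rho> (real m * y) = real m * \<rho> y" if "0 \<le> y" "real m * y < d" for m y
    using that
  proof (induction m)
    case 0
    have "\<rho> 0 = \<rho> 0 + \<rho> 0" using \<rho>_add[of 0 0] d0 by simp
    then show ?case by simp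
  next
    case (Suc m)
    have a: "real m * y < d" using Suc.prems by (smt (verit) mult_right_mono of_nat_Suc)
    have "\<rho> (real (Suc m) * y) = \<rho> (real m * y + y)" by (simp add: algebra_simps)
    also have "\<dots> = \<rho> (real m * y) + \<rho> y"
      using Suc.prems by (intro \<rho>_add) (auto simp: algebra_simps)
    also have "\<dots> = real (Suc m) * \<rho> y" using Suc.IH[OF Suc.prems(1) a] by (simp add: algebra_simps)
    finally show ?case .
  qed
  obtain N0 :: nat where N0: "1 / d < real N0" using reals_Archimedean2 by blast
  define N where "N = max N0 1"
  have N1: "N \<ge> 1" by (simp add: N_def)
  have Nd: "1 / real N < d"
  proof -
    have "1 / d < real N" using N0 by (simp add: N_def)
    then show ?thesis using d0 N1 by (simp add: field_simps)
  qed
  define u where "u = 1 / real N"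
  have u0: "0 < u" and ud: "u < d" using N1 Nd by (auto simp: u_def)
  have u1: "u \<in> {0..<1}" using ud d2 u0 by auto
  have "frac (real N * \<phi> u) = \<phi> (frac (real N * u))" using hom_TT_nat[OF h u1] by simp
  also have "real N * u = 1" using N1 by (simp add: u_def)
  also have "\<phi> (frac 1) = 0" using hom_one[OF h group_T group_T] by simp
  finally have "frac (real N * \<phi> u) = 0" .
  then have "real N * \<phi> u \<in> \<int>" by (metis frac_eq_0_iff)
  moreover have "real N * \<phi> u - real N * \<rho> u \<in> \<int>"
  proof -
    have "real N * \<phi> u - real N * \<rho> u = real N * (\<phi> u - \<rho> u)" by (simp add: algebra_simps)
    then show ?thesis using \<rho>_int[of u] by (metis Ints_mult Ints_of_nat)
  qed
  ultimately have "real N * \<phi> u - (real N * \<phi> u - real N * \<rho> u) \<in> \<int>" by (rule Ints_diff)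
  then have "real N * \<rho> u \<in> \<int>" by simp
  then obtain c where c: "real N * \<rho> u = of_int c" by (auto elim: Ints_cases)
  have \<rho>u: "\<rho> u = of_int c * u" using c N1 by (simp add: u_def field_simps)
  have \<rho>_rat: "\<rho> (real j / (real N * real m)) = of_int c * (real j / (real N * real m))"
    if m1: "m \<ge> 1" and jd: "real j / (real N * real m) < d" for j m :: nat
  proof -
    define v where "v = 1 / (real N * real m)"
    have v0: "v \<ge> 0" by (simp add: v_def)
    have "real m * v = u" using m1 by (simp add: v_def u_def)
    then have "\<rho> u = real m * \<rho> v" using \<rho>_mult[of v m] v0 ud by simp
    then have "real m * \<rho> v = real m * (of_int c * v)"
      using \<rho>u \<open>real m * v = u\<close> by (metis mult.left_commute)
    then have \<rho>v: "\<rho> v = of_int c * v" using m1 by simp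
    have "real j * v = real j / (real N * real m)" by (simp add: v_def)
    then have "\<rho> (real j / (real N * real m)) = real j * (of_int c * v)" using \<rho>_mult[of v j] v0 jd \<rho>v by simp
    also have "\<dots> = of_int c * (real j * v)" by simp
    finally show ?thesis using \<open>real j * v = real j / (real N * real m)\<close> by simp
  qed
  define B where "B = 1/8 + \<bar>real_of_int c\<bar> * d"
  have B0: "B \<ge> 0" using d0 by (simp add: B_def)
  have \<rho>'_bound: "\<bar>\<rho> y - of_int c * y\<bar> \<le> B" if "0 \<le> y" "y < d" for y
  proof -
    have "\<bar>of_int c * y\<bar> \<le> \<bar>real_of_int c\<bar> * d" using that by (simp add: abs_mult mult_left_mono)
    then show ?thesis using \<rho>_small[OF that] unfolding B_def by linarith
  qed
  have lin: "\<rho> y = of_int c * y" if y: "0 \<le> y" "y < d" for y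
  proof (rule ccontr)
    define a where "a = \<rho> y - of_int c * y"
    assume "\<rho> y \<noteq> of_int c * y"
    then have a0: "\<bar>a\<bar> > 0" by (simp add: a_def)
    define k where "k = nat \<lceil>(B + 1) / \<bar>a\<bar>\<rceil>"
    have kB: "real k * \<bar>a\<bar> \<ge> B + 1"
    proof -
      have "real k \<ge> (B + 1) / \<bar>a\<bar>" unfolding k_def by linarith
      then show ?thesis using a0 by (simp add: field_simps)
    qed
    obtain m0 :: nat where m0: "real k / (d * real N) < real m0" using reals_Archimedean2 by blast
    define m where "m = max m0 1"
    have m1: "m \<ge> 1" by (simp add: m_def)
    have km: "real k / (real N * real m) < d"
    proof -
      have "real k / (d * real N) < real m" using m0 by (simp add: m_def)
      then have "real k < real m * (d * real N)" using d0 N1 by (simp add: field_simps)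
      then show ?thesis using N1 m1 by (simp add: field_simps)
    qed
    define D where "D = real N * real m"
    have D1: "D \<ge> 1"
    proof -
      have "real N \<ge> 1" "real m \<ge> 1" using N1 m1 by auto
      then have "1 * 1 \<le> real N * real m" by (intro mult_mono) auto
      then show ?thesis by (simp add: D_def)
    qed
    define j where "j = nat \<lfloor>y * D\<rfloor>"
    have "y * D \<ge> 0" using y D1 by simp
    then have rj: "real j = of_int \<lfloor>y * D\<rfloor>" by (simp add: j_def)
    have jy: "real j \<le> y * D" using rj by simp
    have yj: "y * D < real j + 1" using rj real_of_int_floor_add_one_gt[of "y * D"] by simp
    define q where "q = real j / D"
    define w where "w = y - q"
    have Dp: "D > 0" using D1 by simp
    have q0: "q \<ge> 0" using Dp by (simp add: q_def)
    have qy: "q \<le> y" using jy Dp by (simp add: q_def pos_divide_le_eq)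
    have w0: "w \<ge> 0" using qy by (simp add: w_def)
    have weq: "w = (y * D - real j) / D" using Dp by (simp add: w_def q_def diff_divide_distrib)
    have w1: "w < 1 / D" unfolding weq using yj Dp by (intro divide_strict_right_mono) auto
    have qd: "q < d" using qy y by simp
    have \<rho>q: "\<rho> q = of_int c * q" using \<rho>_rat[OF m1, of j] qd by (simp add: q_def D_def)
    have "\<rho> y = \<rho> q + \<rho> w" using \<rho>_add[OF q0 w0] y by (simp add: w_def)
    then have \<rho>w: "\<rho> w - of_int c * w = a" using \<rho>q by (simp add: a_def w_def algebra_simps)
    have kw: "real k * w < d"
    proof -
      have "real k * w \<le> real k * (1 / D)" using w1 by (intro mult_left_mono) auto
      then show ?thesis using km by (simp add: D_def)
    qed
    have "\<rho> (real k * w) - of_int c * (real k * w) = real k * a"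
      using \<rho>_mult[OF w0 kw] \<rho>w by (simp add: algebra_simps)
    moreover have "\<bar>\<rho> (real k * w) - of_int c * (real k * w)\<bar> \<le> B"
      using \<rho>'_bound[of "real k * w"] kw w0 by simp
    ultimately have "real k * \<bar>a\<bar> \<le> B" by (simp add: abs_mult)
    then show False using kB by simp
  qed
  show ?thesis
  proof (intro exI[of _ c] ballI)
    fix t :: real assume t: "t \<in> {0..<1}"
    obtain M0 :: nat where M0: "1 / d < real M0" using reals_Archimedean2 by blast
    define M where "M = max M0 1"
    have M1: "M \<ge> 1" by (simp add: M_def)
    have "1 / d < real M" using M0 by (simp add: M_def)
    then have Md: "1 / real M < d" using d0 M1 by (simp add: field_simps)
    define v where "v = t / real M"
    have v0: "v \<ge> 0" and vd: "v < d"
    proof -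
      show "v \<ge> 0" using t by (simp add: v_def)
      have "v \<le> 1 / real M" using t M1 by (simp add: v_def divide_right_mono)
      then show "v < d" using Md by simp
    qed
    have v1: "v \<in> {0..<1}" using v0 vd d2 by auto
    have "\<phi> t = \<phi> (frac (real M * v))" using t M1 by (simp add: v_def frac_eq)
    also have "\<dots> = frac (real M * \<phi> v)" by (rule hom_TT_nat[OF h v1])
    also have "\<dots> = frac (real M * \<rho> v)"
    proof -
      have "real M * \<phi> v - real M * \<rho> v \<in> \<int>"
      proof -
        have "real M * \<phi> v - real M * \<rho> v = real M * (\<phi> v - \<rho> v)" by (simp add: algebra_simps)
        then show ?thesis using \<rho>_int[of v] by (metis Ints_mult Ints_of_nat)
      qed
      then show ?thesis using frac_eq_iff_int by blast
    qed
    also have "\<dots> = frac (of_int c * t)" using lin[OF v0 vd] M1 by (simp add: v_def)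
    finally show "\<phi> t = frac (of_int c * t)" .
  qed
qed

lemma comm_group_ZI: "comm_group (ZI_grp :: ('i \<Rightarrow> int) monoid)"
proof (rule comm_groupI)
  fix x :: "'i \<Rightarrow> int"
  show "\<exists>y\<in>carrier ZI_grp. y \<otimes>\<^bsub>ZI_grp\<^esub> x = \<one>\<^bsub>ZI_grp\<^esub>"
    by (intro bexI[of _ "\<lambda>i. - x i"]) auto
qed (auto simp: algebra_simps)

lemma group_ZI: "group (ZI_grp :: ('i \<Rightarrow> int) monoid)"
  using comm_group_ZI comm_group_def by blast

lemma ZI_pow: "x [^]\<^bsub>(ZI_grp :: ('i \<Rightarrow> int) monoid)\<^esub> (n::nat) = (\<lambda>i. int n * x i)"
  by (induction n) (auto simp: algebra_simps)

lemma hom_ZI_T_nat: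
  assumes h: "\<zeta> \<in> hom (ZI_grp :: ('i \<Rightarrow> int) monoid) T_grp"
  shows "\<zeta> (\<lambda>i. int n * y i) = frac (real n * \<zeta> y)"
  using hom_T_nat[OF h group_ZI, of y n] by (simp add: ZI_pow)

lemma hom_ZI_T_vals: "\<zeta> \<in> hom (ZI_grp :: ('i \<Rightarrow> int) monoid) T_grp \<Longrightarrow> \<zeta> y \<in> {0..<1}"
  unfolding hom_def by auto

lemma hom_ZI_T_add: "\<zeta> \<in> hom (ZI_grp :: ('i \<Rightarrow> int) monoid) T_grp \<Longrightarrow> \<zeta> (\<lambda>i. x i + y i) = frac (\<zeta> x + \<zeta> y)"
  unfolding hom_def by auto

lemma hom_ZI_T_zero: "\<zeta> \<in> hom (ZI_grp :: ('i \<Rightarrow> int) monoid) T_grp \<Longrightarrow> \<zeta> (\<lambda>i. 0) = 0"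
  using hom_one[of \<zeta> ZI_grp T_grp] group_ZI group_T by simp

lemma hom_ZI_T_int:
  assumes h: "\<zeta> \<in> hom (ZI_grp :: ('i \<Rightarrow> int) monoid) T_grp"
  shows "\<zeta> (\<lambda>i. k * y i) = frac (of_int k * \<zeta> y)"
proof (cases "k \<ge> 0")
  case True
  then show ?thesis using hom_ZI_T_nat[OF h, of "nat k" y] by simp
next
  case False
  define a where "a = (\<lambda>i. k * y i)"
  define b where "b = (\<lambda>i. int (nat (- k)) * y i)"
  have ab: "(\<lambda>i. a i + b i) = (\<lambda>i. 0)" using False by (auto simp: a_def b_def)
  have "frac (\<zeta> a + \<zeta> b) = 0" using hom_ZI_T_add[OF h, of a b] hom_ZI_T_zero[OF h] ab by simp
  then have "\<zeta> a + \<zeta> b \<in> \<int>" by (simp add: frac_eq_0_iff)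
  then obtain m where m: "\<zeta> a + \<zeta> b = of_int m" by (auto elim: Ints_cases)
  have "\<zeta> a = - \<zeta> b + of_int m" using m by (simp add: algebra_simps)
  then have "frac (\<zeta> a) = frac (- \<zeta> b)" by (simp only: frac_add_of_int_right)
  then have e1: "\<zeta> a = frac (- \<zeta> b)" using hom_ZI_T_vals[OF h, of a] by (simp add: frac_eq)

  have "\<zeta> b = frac (real (nat (- k)) * \<zeta> y)" unfolding b_def by (rule hom_ZI_T_nat[OF h])
  then have "frac (- \<zeta> b) = frac (- (real (nat (- k)) * \<zeta> y))" by (simp only: frac_neg_frac)
  also have "- (real (nat (- k)) * \<zeta> y) = of_int k * \<zeta> y" using False by simp
  finally have "\<zeta> a = frac (of_int k * \<zeta> y)" using e1 by simp
  then show ?thesis by (simp add: a_def)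
qed

definition unitv :: "'i \<Rightarrow> 'i \<Rightarrow> int" where
  "unitv a = (\<lambda>i. if i = a then 1 else 0)"

lemma char_factor:
  fixes L :: "'l monoid" and \<tau>L :: "'l topology" and \<beta> :: "('i \<Rightarrow> int) \<Rightarrow> real \<Rightarrow> 'l"
  assumes Lg: "group L" and ts: "topspace \<tau>L = carrier L"
    and cb: "cont_bihom ZI_grp ZI_top T_grp T_top L \<tau>L \<beta>"
    and chi: "ch \<in> cont_chars L \<tau>L"
  shows "\<exists>g0\<in>carrier H_grp. \<forall>x. \<forall>t\<in>{0..<1}. ch (\<beta> x t) = tmul t (pairing g0 x)"
proof -
  have chih: "ch \<in> hom L T_grp" and chic: "continuous_map \<tau>L T_top ch"
    using chi by (auto simp: cont_chars_def)
  have hx: "\<And>x. \<beta> x \<in> hom T_grp L" and cx: "\<And>x. continuous_map T_top \<tau>L (\<beta> x)"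
    and ht: "\<And>t. t \<in> {0..<1} \<Longrightarrow> (\<lambda>x. \<beta> x t) \<in> hom ZI_grp L"
    and joint: "\<And>U. openin \<tau>L U \<Longrightarrow> \<one>\<^bsub>L\<^esub> \<in> U \<Longrightarrow>
        (\<exists>V W. openin ZI_top V \<and> \<one>\<^bsub>ZI_grp\<^esub> \<in> V \<and> openin T_top W \<and> \<one>\<^bsub>T_grp\<^esub> \<in> W \<and>
               (\<forall>x\<in>V. \<forall>y\<in>W. \<beta> x y \<in> U))"
    using cb unfolding cont_bihom_def by auto
  define \<kappa> where "\<kappa> x t = ch (\<beta> x t)" for x t
  have kT: "(\<lambda>t. \<kappa> x t) \<in> hom T_grp T_grp" for x
    using hom_compose[OF hx chih] by (simp add: o_def \<kappa>_def)
  have kTc: "continuous_map T_top T_top (\<lambda>t. \<kappa> x t)" for x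
    using continuous_map_compose[OF cx chic] by (simp add: o_def \<kappa>_def)
  have kZ: "(\<lambda>x. \<kappa> x t) \<in> hom ZI_grp T_grp" if "t \<in> {0..<1}" for t
    using hom_compose[OF ht[OF that] chih] by (simp add: o_def \<kappa>_def)
  have chi1: "ch \<one>\<^bsub>L\<^esub> = 0" using hom_one[OF chih Lg group_T] by simp
  define U0 where "U0 = {z \<in> topspace \<tau>L. ch z \<in> tball 0 (1/8)}"
  have U0o: "openin \<tau>L U0" using chic openin_tball unfolding U0_def continuous_map_def by blast
  have U01: "\<one>\<^bsub>L\<^esub> \<in> U0" using ts chi1 Lg by (simp add: U0_def tball_center group.is_monoid monoid.one_closed)
  obtain V W where VW: "openin ZI_top V" "(\<lambda>i. 0) \<in> V" "openin T_top W" "0 \<in> W"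
    "\<And>x t. x \<in> V \<Longrightarrow> t \<in> W \<Longrightarrow> \<beta> x t \<in> U0"
    using joint[OF U0o U01] by auto
  obtain S where S: "finite S" "cyl S (\<lambda>i. 0) \<subseteq> V" using openin_ZI_cyl[OF VW(1,2)] by blast
  obtain \<delta> where \<delta>: "\<delta> > 0" "\<And>y. y \<in> {0..<1} \<Longrightarrow> tnorm (y - 0) < \<delta> \<Longrightarrow> y \<in> W"
    using VW(3,4) unfolding openin_T_iff by blast
  have small: "tnorm (\<kappa> x t) < 1/8" if "x \<in> cyl S (\<lambda>i. 0)" "t \<in> {0..<1}" "tnorm t < \<delta>" for x t
  proof -
    have "\<beta> x t \<in> U0" using VW(5) S(2) that \<delta>(2) by auto
    then show ?thesis by (simp add: U0_def tball_def \<kappa>_def)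
  qed
  have van1: "\<kappa> x t = 0" if x: "x \<in> cyl S (\<lambda>i. 0)" and t: "t \<in> {0..<1}" "tnorm t < \<delta>" for x t
  proof -
    have "tnorm (real k * \<kappa> x t) \<le> 1/4" if "1 \<le> k" for k :: nat
    proof -
      have "(\<lambda>i. int k * x i) \<in> cyl S (\<lambda>i. 0)" using x by (simp add: cyl_def)
      then have "tnorm (\<kappa> (\<lambda>i. int k * x i) t) < 1/8" using small t by blast
      moreover have "\<kappa> (\<lambda>i. int k * x i) t = frac (real k * \<kappa> x t)"
        by (rule hom_ZI_T_nat[OF kZ[OF t(1)]])
      ultimately show ?thesis by simp
    qed
    then have "\<kappa> x t \<in> \<int>" by (rule tnorm_all_multiples_zero)
    moreover have "\<kappa> x t \<in> {0..<1}" using hom_ZI_T_vals[OF kZ[OF t(1)]] .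
    ultimately show ?thesis by (metis Ints_cases atLeastLessThan_iff frac_eq frac_of_int)
  qed
  have van: "\<kappa> x t = 0" if x: "x \<in> cyl S (\<lambda>i. 0)" and t: "t \<in> {0..<1}" for x t
  proof -
    obtain M0 :: nat where M0: "1 / \<delta> < real M0" using reals_Archimedean2 by blast
    define M where "M = max M0 1"
    have M1: "M \<ge> 1" by (simp add: M_def)
    have "1 / \<delta> < real M" using M0 by (simp add: M_def)
    then have Md: "1 / real M < \<delta>" using \<delta>(1) M1 by (simp add: field_simps)
    define v where "v = t / real M"
    have v0: "v \<ge> 0" using t by (simp add: v_def)
    have v1': "v \<le> 1 / real M" using t M1 by (simp add: v_def divide_right_mono)
    have vd: "v < \<delta>" using v1' Md by simp
    have "t / real M \<le> t / 1" using t M1 by (intro divide_left_mono) auto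
    then have v1: "v \<in> {0..<1}" using v0 t by (auto simp: v_def)
    have tv: "tnorm v < \<delta>" using tnorm_le_abs[of v] v0 vd by simp
    have "\<kappa> x t = \<kappa> x (frac (real M * v))" using t M1 by (simp add: v_def frac_eq)
    also have "\<dots> = frac (real M * \<kappa> x v)" by (rule hom_TT_nat[OF kT v1])
    also have "\<kappa> x v = 0" by (rule van1[OF x v1 tv])
    finally show ?thesis by simp
  qed
  have "\<exists>c::int. \<forall>t\<in>{0..<1}. \<kappa> (unitv i) t = frac (of_int c * t)" for i
  proof -
    have k0: "\<kappa> (unitv i) 0 = 0" using hom_one[OF kT group_T group_T] by simp
    have "\<forall>x\<in>topspace T_top. \<forall>e>0. \<exists>V. openin T_top V \<and> x \<in> V \<and> (\<forall>y\<in>V. tnorm (\<kappa> (unitv i) y - \<kappa> (unitv i) x) < e)"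
      using kTc[of "unitv i"] unfolding cont_T_iff by blast
    moreover have "(0::real) \<in> topspace T_top" "(1/8::real) > 0" by auto
    ultimately have "\<exists>V'. openin T_top V' \<and> 0 \<in> V' \<and> (\<forall>y\<in>V'. tnorm (\<kappa> (unitv i) y - \<kappa> (unitv i) 0) < 1/8)"
      by blast
    then obtain V' where V': "openin T_top V'" "0 \<in> V'" "\<forall>y\<in>V'. tnorm (\<kappa> (unitv i) y) < 1/8"
      using k0 by auto
    obtain \<delta>' where \<delta>': "\<delta>' > 0" "\<And>y. y \<in> {0..<1} \<Longrightarrow> tnorm (y - 0) < \<delta>' \<Longrightarrow> y \<in> V'"
      using V'(1,2) unfolding openin_T_iff by blast
    have "tnorm (\<kappa> (unitv i) t) < 1/8" if "t \<in> {0..<1}" "tnorm t < \<delta>'" for t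
      using that \<delta>'(2) V'(3) by simp
    then show ?thesis by (rule T_endo_class[OF kT \<delta>'(1)])
  qed
  then obtain C where C: "\<And>i t. t \<in> {0..<1} \<Longrightarrow> \<kappa> (unitv i) t = frac (of_int (C i) * t)" by metis
  define g0 where "g0 = (\<lambda>i. if i \<in> S then C i else 0)"
  have g0H: "g0 \<in> carrier H_grp"
  proof -
    have "{i. g0 i \<noteq> 0} \<subseteq> S" by (auto simp: g0_def)
    then show ?thesis using S(1) by (simp add: H_carrier finite_subset)
  qed
  have main: "\<kappa> x t = tmul t (pairing g0 x)" if t: "t \<in> {0..<1}" for x t
  proof -
    define \<zeta> where "\<zeta> = (\<lambda>x. \<kappa> x t)"
    have zh: "\<zeta> \<in> hom ZI_grp T_grp" unfolding \<zeta>_def by (rule kZ[OF t])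
    define xr where "xr A = (\<lambda>i. if i \<in> A then x i else 0)" for A
    have ind: "\<zeta> (xr A) = tmul t (\<Sum>i\<in>A. C i * x i)" if "finite A" for A
      using that
    proof (induction A rule: finite_induct)
      case empty
      have "xr {} = (\<lambda>i. 0)" by (simp add: xr_def)
      then show ?case using hom_ZI_T_zero[OF zh] by simp
    next
      case (insert a A)
      have dec: "xr (insert a A) = (\<lambda>i. xr A i + x a * unitv a i)"
        using insert.hyps(2) by (auto simp: xr_def unitv_def)
      have "\<zeta> (xr (insert a A)) = frac (\<zeta> (xr A) + \<zeta> (\<lambda>i. x a * unitv a i))"
        unfolding dec by (rule hom_ZI_T_add[OF zh])
      also have "\<zeta> (\<lambda>i. x a * unitv a i) = frac (of_int (x a) * \<zeta> (unitv a))" by (rule hom_ZI_T_int[OF zh])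
      also have "\<zeta> (unitv a) = frac (of_int (C a) * t)" using C[OF t] by (simp add: \<zeta>_def)
      also have "frac (of_int (x a) * frac (of_int (C a) * t)) = frac (of_int (x a) * (of_int (C a) * t))"
        by (rule frac_mult_int_frac)
      also have "\<zeta> (xr A) = frac (of_int (\<Sum>i\<in>A. C i * x i) * t)" using insert.IH by (simp add: tmul_def)
      also have "frac (frac (of_int (\<Sum>i\<in>A. C i * x i) * t) + frac (of_int (x a) * (of_int (C a) * t)))
          = frac (of_int (\<Sum>i\<in>A. C i * x i) * t + of_int (x a) * (of_int (C a) * t))"
        by (simp only: frac_add_frac1 frac_add_frac2)
      also have "of_int (\<Sum>i\<in>A. C i * x i) * t + of_int (x a) * (of_int (C a) * t)
          = of_int (\<Sum>i\<in>insert a A. C i * x i) * t"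
        using insert.hyps by (simp add: algebra_simps)
      finally show ?case by (simp add: tmul_def)
    qed
    define x2 where "x2 = (\<lambda>i. if i \<in> S then 0 else x i)"
    have x2c: "x2 \<in> cyl S (\<lambda>i. 0)" by (simp add: x2_def cyl_def)
    have dec: "x = (\<lambda>i. xr S i + x2 i)" by (auto simp: xr_def x2_def)
    have "\<zeta> x = frac (\<zeta> (xr S) + \<zeta> x2)" by (subst dec) (rule hom_ZI_T_add[OF zh])
    also have "\<zeta> x2 = 0" unfolding \<zeta>_def by (rule van[OF x2c t])
    also have "frac (\<zeta> (xr S) + 0) = \<zeta> (xr S)" using hom_ZI_T_vals[OF zh] by (simp add: frac_eq)
    also have "\<zeta> (xr S) = tmul t (\<Sum>i\<in>S. C i * x i)" by (rule ind[OF S(1)])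
    also have "(\<Sum>i\<in>S. C i * x i) = pairing g0 x"
    proof -
      have "pairing g0 x = (\<Sum>i\<in>S. g0 i * x i)" using S(1) by (intro pairing_sum) (auto simp: g0_def)
      also have "\<dots> = (\<Sum>i\<in>S. C i * x i)" by (intro sum.cong) (auto simp: g0_def)
      finally show ?thesis by simp
    qed
    finally show ?thesis by (simp add: \<zeta>_def)
  qed
  show ?thesis using g0H main unfolding \<kappa>_def by blast
qed

lemma tr_cont_bihom:
  assumes f: "inj f" and cb: "cont_bihom A \<tau>A B \<tau>B G \<tau> \<gamma>"
    and sp: "\<And>x y. \<gamma> x y \<in> topspace \<tau>" and one: "\<one>\<^bsub>G\<^esub> \<in> topspace \<tau>"
  shows "cont_bihom A \<tau>A B \<tau>B (tr_grp f G) (tr_top f \<tau>) (\<lambda>x y. f (\<gamma> x y))"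
  unfolding cont_bihom_def
proof (intro conjI ballI allI impI)
  fix x assume x: "x \<in> carrier A"
  have "\<gamma> x \<in> hom B G" "continuous_map \<tau>B \<tau> (\<gamma> x)" using cb x unfolding cont_bihom_def by auto
  then show "(\<lambda>y. f (\<gamma> x y)) \<in> hom B (tr_grp f G)" "continuous_map \<tau>B (tr_top f \<tau>) (\<lambda>y. f (\<gamma> x y))"
    using tr_hom_to[OF _ f] tr_cont_to by auto
next
  fix y assume y: "y \<in> carrier B"
  have "(\<lambda>x. \<gamma> x y) \<in> hom A G" "continuous_map \<tau>A \<tau> (\<lambda>x. \<gamma> x y)" using cb y unfolding cont_bihom_def by auto
  then show "(\<lambda>x. f (\<gamma> x y)) \<in> hom A (tr_grp f G)" "continuous_map \<tau>A (tr_top f \<tau>) (\<lambda>x. f (\<gamma> x y))"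
    using tr_hom_to[OF _ f] tr_cont_to by auto
next
  fix U assume U: "openin (tr_top f \<tau>) U \<and> \<one>\<^bsub>tr_grp f G\<^esub> \<in> U"
  define U' where "U' = {z \<in> topspace \<tau>. f z \<in> U}"
  have "openin \<tau> U'" using U by (simp add: openin_tr U'_def)
  moreover have "\<one>\<^bsub>G\<^esub> \<in> U'" using U one by (simp add: U'_def)
  ultimately obtain V W where VW: "openin \<tau>A V" "\<one>\<^bsub>A\<^esub> \<in> V" "openin \<tau>B W" "\<one>\<^bsub>B\<^esub> \<in> W"
    "\<forall>x\<in>V. \<forall>y\<in>W. \<gamma> x y \<in> U'"
    using cb unfolding cont_bihom_def by meson
  then show "\<exists>V W. openin \<tau>A V \<and> \<one>\<^bsub>A\<^esub> \<in> V \<and> openin \<tau>B W \<and> \<one>\<^bsub>B\<^esub> \<in> W \<and>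
      (\<forall>x\<in>V. \<forall>y\<in>W. f (\<gamma> x y) \<in> U)"
    by (auto simp: U'_def)
qed

lemma frac_diff_frac: "frac (frac a - frac b) = frac (a - (b::real))"
proof -
  have "frac a - frac b = (a - b) + of_int (\<lfloor>b\<rfloor> - \<lfloor>a\<rfloor>)" by (simp add: frac_def)
  then show ?thesis by (simp only: frac_add_of_int_right)
qed

lemma unit_eq_of_int_diff: "a \<in> {0..<1} \<Longrightarrow> b \<in> {0..<1} \<Longrightarrow> a - b \<in> \<int> \<Longrightarrow> a = (b::real)"
proof -
  assume a: "a \<in> {0..<1}" and b: "b \<in> {0..<1}" and "a - b \<in> \<int>"
  then obtain k where k: "a - b = of_int k" by (auto elim: Ints_cases)
  have "\<bar>real_of_int k\<bar> < 1" using a b k by auto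
  then have "k = 0" by (rule int_abs_lt1)
  then show ?thesis using k by simp
qed

lemma unitv_H: "unitv a \<in> carrier H_grp"
proof -
  have "{i. unitv a i \<noteq> 0} \<subseteq> {a}" by (auto simp: unitv_def)
  then show ?thesis by (simp add: H_carrier finite_subset)
qed

lemma pairing_unitv: "pairing (unitv a) (unitv a) = 1"
proof -
  have "pairing (unitv a) (unitv a) = (\<Sum>i\<in>{a}. unitv a i * unitv a i)"
    by (intro pairing_sum) (auto simp: unitv_def)
  then show ?thesis by (simp add: unitv_def)
qed

theorem proposition4p4:
  fixes L :: "'l monoid" and \<tau>L :: "'l topology"
    and \<beta> :: "('i \<Rightarrow> int) \<Rightarrow> real \<Rightarrow> 'l"
  assumes nonmeas: "\<not> ulam_measurable (UNIV :: 'i set)"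
    and tensor: "is_Q_tensor ZI_grp ZI_top T_grp T_top L \<tau>L \<beta> TYPE('m)"
    and universe_large: "\<exists>f :: (('i \<Rightarrow> int) \<Rightarrow> real) \<Rightarrow> 'm. inj f"
  shows "\<exists>\<theta>. \<theta> \<in> hom L Hhat_grp \<and> inj_on \<theta> (carrier L) \<and>
           (\<forall>x t g. t \<in> carrier T_grp \<and> g \<in> carrier H_grp \<longrightarrow>
              \<theta> (\<beta> x t) g = tmul t (pairing g x))"
proof -
  have LQ: "in_Q L \<tau>L" and cb: "cont_bihom ZI_grp ZI_top T_grp T_top L \<tau>L \<beta>"
    and UP: "\<And>(M::'m monoid) \<tau>M \<gamma>. in_Q M \<tau>M \<Longrightarrow> cont_bihom ZI_grp ZI_top T_grp T_top M \<tau>M \<gamma> \<Longrightarrow>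
        (\<exists>\<phi>. \<phi> \<in> hom L M \<and> continuous_map \<tau>L \<tau>M \<phi> \<and>
             (\<forall>x\<in>carrier ZI_grp. \<forall>y\<in>carrier T_grp. \<phi> (\<beta> x y) = \<gamma> x y) \<and>
             (\<forall>\<psi>. \<psi> \<in> hom L M \<and> continuous_map \<tau>L \<tau>M \<psi> \<and>
                   (\<forall>x\<in>carrier ZI_grp. \<forall>y\<in>carrier T_grp. \<psi> (\<beta> x y) = \<gamma> x y) \<longrightarrow>
                   (\<forall>z\<in>carrier L. \<psi> z = \<phi> z)))"
    using tensor unfolding is_Q_tensor_def by blast+
  obtain f0 :: "(('i \<Rightarrow> int) \<Rightarrow> real) \<Rightarrow> 'm" where f0: "inj f0" using universe_large by blast
  let ?M = "tr_grp f0 (Hhat_grp :: (('i \<Rightarrow> int) \<Rightarrow> real) monoid)"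
  let ?TM = "tr_top f0 (Hhat_top :: (('i \<Rightarrow> int) \<Rightarrow> real) topology)"
  have MQ: "in_Q ?M ?TM" by (rule tr_in_Q[OF f0 in_Q_Hhat])
  have cbM: "cont_bihom ZI_grp ZI_top T_grp T_top ?M ?TM (\<lambda>x y. f0 (gam x y))"
    by (rule tr_cont_bihom[OF f0 gam_cont_bihom]) (simp_all add: gam_in Hhat_one_closed)
  obtain \<phi> where \<phi>1: "\<phi> \<in> hom L ?M" and \<phi>2: "continuous_map \<tau>L ?TM \<phi>"
      and \<phi>3: "\<forall>x\<in>carrier ZI_grp. \<forall>y\<in>carrier T_grp. \<phi> (\<beta> x y) = f0 (gam x y)"
      and \<phi>4: "\<forall>\<psi>. \<psi> \<in> hom L ?M \<and> continuous_map \<tau>L ?TM \<psi> \<and>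
           (\<forall>x\<in>carrier ZI_grp. \<forall>y\<in>carrier T_grp. \<psi> (\<beta> x y) = f0 (gam x y)) \<longrightarrow>
           (\<forall>z\<in>carrier L. \<psi> z = \<phi> z)"
    using UP[OF MQ cbM] by (elim exE conjE) blast
  have \<phi>: "\<phi> \<in> hom L ?M" "continuous_map \<tau>L ?TM \<phi>"
      "\<And>x y. y \<in> carrier T_grp \<Longrightarrow> \<phi> (\<beta> x y) = f0 (gam x y)"
      "\<And>\<psi>. \<psi> \<in> hom L ?M \<Longrightarrow> continuous_map \<tau>L ?TM \<psi> \<Longrightarrow>
           (\<forall>x\<in>carrier ZI_grp. \<forall>y\<in>carrier T_grp. \<psi> (\<beta> x y) = f0 (gam x y)) \<Longrightarrow>
           (\<forall>z\<in>carrier L. \<psi> z = \<phi> z)"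
    using \<phi>1 \<phi>2 apply (blast, blast)
    using \<phi>3 apply simp
    using \<phi>4 by blast
  define \<theta> where "\<theta> z = inv_into UNIV f0 (\<phi> z)" for z
  have \<theta>c: "\<theta> z \<in> carrier Hhat_grp" if "z \<in> carrier L" for z
  proof -
    have "\<phi> z \<in> f0 ` carrier Hhat_grp" using \<phi>(1) that unfolding hom_def by auto
    then show ?thesis using f0 by (auto simp: \<theta>_def)
  qed
  have \<theta>hom: "\<theta> \<in> hom L Hhat_grp"
    unfolding hom_def
  proof (intro CollectI conjI ballI)
    show "\<theta> \<in> carrier L \<rightarrow> carrier Hhat_grp" using \<theta>c by auto
    fix z w assume z: "z \<in> carrier L" and w: "w \<in> carrier L"
    have "\<phi> (z \<otimes>\<^bsub>L\<^esub> w) = \<phi> z \<otimes>\<^bsub>?M\<^esub> \<phi> w" using \<phi>(1) z w unfolding hom_def by auto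
    then show "\<theta> (z \<otimes>\<^bsub>L\<^esub> w) = \<theta> z \<otimes>\<^bsub>Hhat_grp\<^esub> \<theta> w"
      using f0 by (simp add: \<theta>_def)
  qed
  have \<theta>cont: "continuous_map \<tau>L Hhat_top \<theta>"
    unfolding \<theta>_def by (rule tr_cont_from[OF f0 \<phi>(2)])
  have \<theta>\<beta>: "\<theta> (\<beta> x t) = gam x t" if "t \<in> {0..<1}" for x t
    using \<phi>(3)[of t x] that f0 by (simp add: \<theta>_def)
  have \<theta>uniq: "\<forall>z\<in>carrier L. \<psi> z = \<theta> z"
    if \<psi>: "\<psi> \<in> hom L Hhat_grp" "continuous_map \<tau>L Hhat_top \<psi>" "\<And>x t. t \<in> {0..<1} \<Longrightarrow> \<psi> (\<beta> x t) = gam x t" for \<psi>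
  proof -
    have "\<forall>z\<in>carrier L. f0 (\<psi> z) = \<phi> z"
      using \<phi>(4)[OF tr_hom_to[OF \<psi>(1) f0] tr_cont_to[OF \<psi>(2)]] \<psi>(3) by auto
    then show ?thesis using f0 unfolding \<theta>_def by (metis inv_f_f)
  qed
  have Ltg: "top_ab_group L \<tau>L" and LH: "Hausdorff_space \<tau>L"
    and Lqb: "\<And>U. openin \<tau>L U \<Longrightarrow> \<one>\<^bsub>L\<^esub> \<in> U \<Longrightarrow> \<exists>V. quasi_convex L \<tau>L V \<and> V \<subseteq> U \<and>
             (\<exists>W. openin \<tau>L W \<and> \<one>\<^bsub>L\<^esub> \<in> W \<and> W \<subseteq> V)"
    using LQ unfolding in_Q_def by blast+
  have Lcg: "comm_group L" and Lts: "topspace \<tau>L = carrier L"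
    using Ltg unfolding top_ab_group_def by blast+
  have Lg: "group L" using Lcg comm_group_def by blast
  interpret L: group L by (rule Lg)
  have inj: "inj_on \<theta> (carrier L)"
  proof (rule inj_onI, rule ccontr)
    fix z1 z2 assume z1: "z1 \<in> carrier L" and z2: "z2 \<in> carrier L" and eq: "\<theta> z1 = \<theta> z2" and ne: "z1 \<noteq> z2"
    define g where "g = z1 \<otimes>\<^bsub>L\<^esub> inv\<^bsub>L\<^esub> z2"
    have gc: "g \<in> carrier L" using z1 z2 by (simp add: g_def)
    have g1: "g \<noteq> \<one>\<^bsub>L\<^esub>"
    proof
      assume "g = \<one>\<^bsub>L\<^esub>"
      then have "z1 = \<one>\<^bsub>L\<^esub> \<otimes>\<^bsub>L\<^esub> z2" using L.inv_solve_right'[of "\<one>\<^bsub>L\<^esub>" z1 z2] z1 z2 by (simp add: g_def)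
      then show False using ne z2 by simp
    qed
    obtain U V where UV: "openin \<tau>L U" "openin \<tau>L V" "\<one>\<^bsub>L\<^esub> \<in> U" "g \<in> V" "disjnt U V"
      using LH gc g1 Lts unfolding Hausdorff_space_def by (metis L.one_closed)
    have gU: "g \<notin> U" using UV(4,5) by (auto simp: disjnt_def)
    obtain V' where V': "quasi_convex L \<tau>L V'" "V' \<subseteq> U" using Lqb[OF UV(1,3)] by blast
    then have "g \<in> carrier L - V'" using gc gU by auto
    then obtain ch where ch: "ch \<in> cont_chars L \<tau>L" "tnorm (ch g) > 1/4"
      using V'(1) unfolding quasi_convex_def by blast
    have chh: "ch \<in> hom L T_grp" and chc: "continuous_map \<tau>L T_top ch" using ch(1) by (auto simp: cont_chars_def)
    obtain g0 where g0: "g0 \<in> carrier H_grp" "\<And>x t. t \<in> {0..<1} \<Longrightarrow> ch (\<beta> x t) = tmul t (pairing g0 x)"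
      using char_factor[OF Lg Lts cb ch(1)] by blast
    define e :: "'i \<Rightarrow> int" where "e = unitv undefined"
    have eH: "e \<in> carrier H_grp" by (simp add: e_def unitv_H)
    have ee: "pairing e e = 1" by (simp add: e_def pairing_unitv)
    define s where "s z = frac (ch z - \<theta> z g0)" for z
    have s01: "s z \<in> {0..<1}" for z by (simp add: s_def frac_in01)
    have chv: "\<And>z. z \<in> carrier L \<Longrightarrow> ch z \<in> {0..<1}" using chh unfolding hom_def by auto
    have \<theta>v: "\<And>z h. z \<in> carrier L \<Longrightarrow> h \<in> carrier H_grp \<Longrightarrow> \<theta> z h \<in> {0..<1}" using \<theta>c Hhat_memD(2) by blast
    have shom: "s \<in> hom L T_grp"
      unfolding hom_def
    proof (intro CollectI conjI ballI)
      show "s \<in> carrier L \<rightarrow> carrier T_grp" using s01 by auto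
      fix z w assume z: "z \<in> carrier L" and w: "w \<in> carrier L"
      have cm: "ch (z \<otimes>\<^bsub>L\<^esub> w) = frac (ch z + ch w)" using chh z w unfolding hom_def by auto
      have tm: "\<theta> (z \<otimes>\<^bsub>L\<^esub> w) g0 = frac (\<theta> z g0 + \<theta> w g0)"
        using \<theta>hom z w g0(1) unfolding hom_def by auto
      have "s (z \<otimes>\<^bsub>L\<^esub> w) = frac (frac (ch z + ch w) - frac (\<theta> z g0 + \<theta> w g0))"
        by (simp add: s_def cm tm)
      also have "\<dots> = frac ((ch z + ch w) - (\<theta> z g0 + \<theta> w g0))" by (rule frac_diff_frac)
      also have "(ch z + ch w) - (\<theta> z g0 + \<theta> w g0) = (ch z - \<theta> z g0) + (ch w - \<theta> w g0)" by simp
      also have "frac \<dots> = frac (s z + s w)" by (simp only: s_def frac_add_frac1 frac_add_frac2)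
      finally show "s (z \<otimes>\<^bsub>L\<^esub> w) = s z \<otimes>\<^bsub>T_grp\<^esub> s w" by simp
    qed
    have scont: "continuous_map \<tau>L T_top s"
    proof -
      have "continuous_map \<tau>L T_top (\<lambda>z. frac (ch z + frac (- \<theta> z g0)))"
        by (intro cont_T_add chc cont_T_neg cont_ev_comp[OF \<theta>cont g0(1)])
      then show ?thesis by (rule continuous_map_eq) (simp add: s_def)
    qed
    define \<Psi> where "\<Psi> z = \<theta> z \<otimes>\<^bsub>Hhat_grp\<^esub> gam e (s z)" for z
    have \<Psi>hom: "\<Psi> \<in> hom L Hhat_grp"
    proof -
      have "gam e \<circ> s \<in> hom L Hhat_grp" by (rule hom_compose[OF shom gam_hom_T])
      then have "(\<lambda>z. gam e (s z)) \<in> hom L Hhat_grp" by (simp add: o_def)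
      then show ?thesis unfolding \<Psi>_def by (rule comm_group.hom_group_mult[OF comm_group_Hhat \<theta>hom])
    qed
    have \<Psi>cont: "continuous_map \<tau>L Hhat_top \<Psi>"
    proof -
      have cm: "continuous_map (prod_topology Hhat_top Hhat_top) Hhat_top
          (\<lambda>p. fst p \<otimes>\<^bsub>(Hhat_grp :: (('i \<Rightarrow> int) \<Rightarrow> real) monoid)\<^esub> snd p)"
        using top_ab_group_Hhat unfolding top_ab_group_def by blast
      have gs: "continuous_map \<tau>L Hhat_top (\<lambda>z. gam e (s z))"
        using continuous_map_compose[OF scont gam_cont_T] by (simp add: o_def)
      have "continuous_map \<tau>L (prod_topology Hhat_top Hhat_top) (\<lambda>z. (\<theta> z, gam e (s z)))"
        by (intro continuous_map_pairedI \<theta>cont gs)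
      from continuous_map_compose[OF this cm]
      have "continuous_map \<tau>L Hhat_top (\<lambda>z. \<theta> z \<otimes>\<^bsub>Hhat_grp\<^esub> gam e (s z))" by (simp only: o_def fst_conv snd_conv)
      moreover have "(\<lambda>z. \<theta> z \<otimes>\<^bsub>Hhat_grp\<^esub> gam e (s z)) = \<Psi>" by (rule ext) (simp only: \<Psi>_def)
      ultimately show ?thesis by simp
    qed
    have \<Psi>\<beta>: "\<Psi> (\<beta> x t) = gam x t" if t: "t \<in> {0..<1}" for x t
    proof -
      have "s (\<beta> x t) = 0"
        using g0(2)[OF t, of x] \<theta>\<beta>[OF t, of x] g0(1) by (simp add: s_def gam_apply)
      moreover have "gam e 0 = \<one>\<^bsub>Hhat_grp\<^esub>" by (simp add: gam_def)
      ultimately have "\<Psi> (\<beta> x t) = \<theta> (\<beta> x t) \<otimes>\<^bsub>Hhat_grp\<^esub> \<one>\<^bsub>Hhat_grp\<^esub>" by (simp add: \<Psi>_def)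
      also have "\<dots> = \<theta> (\<beta> x t)" using \<theta>\<beta>[OF t, of x] gam_in monoid.r_one[OF group.is_monoid[OF group_Hhat]] by metis
      finally show ?thesis using \<theta>\<beta>[OF t] by simp
    qed
    have \<Psi>\<theta>: "\<forall>z\<in>carrier L. \<Psi> z = \<theta> z" by (rule \<theta>uniq[OF \<Psi>hom \<Psi>cont \<Psi>\<beta>])
    have s0: "s z = 0" if z: "z \<in> carrier L" for z
    proof -
      have "\<Psi> z e = frac (\<theta> z e + gam e (s z) e)" using eH by (simp add: \<Psi>_def)
      also have "gam e (s z) e = s z" using eH ee s01[of z] by (simp add: gam_apply tmul_one)
      finally have "frac (\<theta> z e + s z) = \<theta> z e" using \<Psi>\<theta> z by simp
      then have "frac (\<theta> z e + s z) = frac (\<theta> z e)" using \<theta>v[OF z eH] by (simp add: frac_eq)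
      then have "(\<theta> z e + s z) - \<theta> z e \<in> \<int>" using frac_eq_iff_int by blast
      then have "s z - 0 \<in> \<int>" by simp
      then show ?thesis using s01[of z] by (intro unit_eq_of_int_diff) auto
    qed
    have ch\<theta>: "ch z = \<theta> z g0" if z: "z \<in> carrier L" for z
    proof -
      have "frac (ch z - \<theta> z g0) = 0" using s0[OF z] by (simp add: s_def)
      then have "ch z - \<theta> z g0 \<in> \<int>" by (simp add: frac_eq_0_iff)
      then show ?thesis using chv[OF z] \<theta>v[OF z g0(1)] by (rule unit_eq_of_int_diff[rotated 2])
    qed
    have "ch z1 = ch z2" using ch\<theta>[OF z1] ch\<theta>[OF z2] eq by simp
    have "ch g = frac (ch z1 + ch (inv\<^bsub>L\<^esub> z2))" using chh z1 z2 unfolding hom_def g_def by auto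
    also have "\<dots> = frac (ch z2 + ch (inv\<^bsub>L\<^esub> z2))" using \<open>ch z1 = ch z2\<close> by simp
    also have "\<dots> = ch \<one>\<^bsub>L\<^esub>" using hom_mult[OF chh z2 L.inv_closed[OF z2]] z2 by simp
    also have "\<dots> = 0" using hom_one[OF chh Lg group_T] by simp
    finally have "ch g = 0" .
    then show False using ch(2) by (simp add: tnorm_def)
  qed
  show ?thesis
  proof (intro exI[of _ \<theta>] conjI \<theta>hom inj allI impI)
    fix x t and g :: "'i \<Rightarrow> int" assume "t \<in> carrier T_grp \<and> g \<in> carrier H_grp"
    then show "\<theta> (\<beta> x t) g = tmul t (pairing g x)" using \<theta>\<beta> by (simp add: gam_apply)
  qed
qed

end
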